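(* Let $a$, $b$, $c$ be pairwise coprime positive integers with $a+c$ even. Then for all integers $p,q\geq1$ and all $x,y,z\in\mathbb{R}$, \begin{align*} a^{1-p}b^{1-q}S^{(3,5)}_{p,q}(a,b,c:x,y,z) &=-\frac{q}{2}\sum_{j=1}^{p}\binom{p-1}{j-1}a^{1-j}c^{1+j-p-q}S^{(4)}_{p+q-j,j}(c,-a,b:z,x,y)\\ &\quad+\sum_{h=0}^{q}\binom{q}{h}(-1)^{h}b^{1-h}c^{1+h-p-q}S^{(3,5)}_{p+q-h,h}(c,b,a:z,-y,x). \end{align*}
   Context: $B_n(x)$ is the $n$th Bernoulli polynomial ($\frac{te^{xt}}{e^t-1}=\sum B_n(x)\frac{t^n}{n!}$) and $\mathcal{B}_n(x)=B_n(x-[x])$ the $n$th Bernoulli function ($[x]$ the largest integer $\le x$; $\mathcal{B}_0\equiv1$). $E_n(x)$ is the $n$th Euler polynomial ($\frac{2e^{xt}}{e^t+1}=\sum E_n(x)\frac{t^n}{n!}$), and the Euler function $\mathcal{E}_n$ ($n\ge0$) is defined by $\mathcal{E}_n(x)=E_n(x)$ for $0\le x<1$ and $\mathcal{E}_n(x+m)=(-1)^m\mathcal{E}_n(x)$ for $m\in\mathbb{Z}$. For integers $a,b$, a positive integer $c$ and real $x,y,z$ define, for integers $p\ge1$, $q\ge0$, $$S^{(3,5)}_{p,q}(a,b,c:x,y,z)=\sum_{\mu=0}^{c-1}(-1)^{\mu}\mathcal{E}_{p-1}\Big(a\frac{\mu+z}{c}+x\Big)\mathcal{B}_{q}\Big(b\frac{\mu+z}{c}+y\Big),$$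 and, for integers $p,q\ge1$, $$S^{(4)}_{p,q}(a,b,c:x,y,z)=\sum_{\mu=0}^{c-1}\mathcal{E}_{p-1}\Big(a\frac{\mu+z}{c}+x\Big)\mathcal{E}_{q-1}\Big(b\frac{\mu+z}{c}+y\Big).$$ *)

theory Defs
  imports Complex_Main
begin

text \<open>Bernoulli polynomials, defined by comparing coefficients of t^(n+1)/(n+1)! in
  t e^(xt) = (e^t - 1) * sum B_n(x) t^n/n!, i.e. (n+1) x^n = sum_(k<=n) (n+1 choose k) B_k(x).\<close>
fun bernpoly :: "nat \<Rightarrow> real \<Rightarrow> real" where
  "bernpoly n x = ((real n + 1) * x ^ n
      - (\<Sum>k<n. real ((n + 1) choose k) * (if k < n then bernpoly k x else 0))) / (real n + 1)"

text \<open>Euler polynomials, defined by comparing coefficients of t^n/n! in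
  2 e^(xt) = (e^t + 1) * sum E_n(x) t^n/n!, i.e. 2 x^n = 2 E_n(x) + sum_(k<n) (n choose k) E_k(x).\<close>
fun eulerpoly :: "nat \<Rightarrow> real \<Rightarrow> real" where
  "eulerpoly n x = x ^ n
      - (\<Sum>k<n. real (n choose k) * (if k < n then eulerpoly k x else 0)) / 2"

definition bernfun :: "nat \<Rightarrow> real \<Rightarrow> real" where
  "bernfun n x = bernpoly n (x - of_int \<lfloor>x\<rfloor>)"

definition eulerfun :: "nat \<Rightarrow> real \<Rightarrow> real" where
  "eulerfun n x = (-1) powi \<lfloor>x\<rfloor> * eulerpoly n (x - of_int \<lfloor>x\<rfloor>)"

definition S35 :: "nat \<Rightarrow> nat \<Rightarrow> int \<Rightarrow> int \<Rightarrow> int \<Rightarrow> real \<Rightarrow> real \<Rightarrow> real \<Rightarrow> real" where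
  "S35 p q a b c x y z = (\<Sum>\<mu>\<in>{0..<nat c}.
      (-1) ^ \<mu> * eulerfun (p - 1) (of_int a * ((real \<mu> + z) / of_int c) + x)
               * bernfun q (of_int b * ((real \<mu> + z) / of_int c) + y))"

definition S4 :: "nat \<Rightarrow> nat \<Rightarrow> int \<Rightarrow> int \<Rightarrow> int \<Rightarrow> real \<Rightarrow> real \<Rightarrow> real \<Rightarrow> real" where
  "S4 p q a b c x y z = (\<Sum>\<mu>\<in>{0..<nat c}.
      eulerfun (p - 1) (of_int a * ((real \<mu> + z) / of_int c) + x)
      * eulerfun (q - 1) (of_int b * ((real \<mu> + z) / of_int c) + y))"

end

theory Submission
  imports Defs
begin


declare bernpoly.simps[simp del] eulerpoly.simps[simp del]

lemma bernpoly_def2: "bernpoly n x = ((real n + 1) * x ^ n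
      - (\<Sum>k<n. real ((n + 1) choose k) * bernpoly k x)) / (real n + 1)"
proof -
  have "(\<Sum>k<n. real ((n + 1) choose k) * (if k < n then bernpoly k x else 0))
      = (\<Sum>k<n. real ((n + 1) choose k) * bernpoly k x)" by (rule sum.cong) auto
  then show ?thesis by (subst bernpoly.simps) simp
qed

lemma eulerpoly_def2: "eulerpoly n x = x ^ n
      - (\<Sum>k<n. real (n choose k) * eulerpoly k x) / 2"
proof -
  have "(\<Sum>k<n. real (n choose k) * (if k < n then eulerpoly k x else 0))
      = (\<Sum>k<n. real (n choose k) * eulerpoly k x)" by (rule sum.cong) auto
  then show ?thesis by (subst eulerpoly.simps) simp
qed

lemma bernpoly_0 [simp]: "bernpoly 0 x = 1"
  by (subst bernpoly_def2) simp

lemma eulerpoly_0 [simp]: "eulerpoly 0 x = 1"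
  by (subst eulerpoly_def2) simp

lemma bern_rec: "(\<Sum>k\<le>n. real (Suc n choose k) * bernpoly k x) = real (Suc n) * x ^ n"
proof -
  have "(\<Sum>k\<le>n. real (Suc n choose k) * bernpoly k x)
     = (\<Sum>k<n. real (Suc n choose k) * bernpoly k x) + real (Suc n) * bernpoly n x"
    by (simp add: lessThan_Suc_atMost[symmetric])
  also have "real (Suc n) * bernpoly n x = (real n + 1) * x ^ n - (\<Sum>k<n. real (Suc n choose k) * bernpoly k x)"
    by (subst bernpoly_def2) (simp add: field_simps)
  finally show ?thesis by simp
qed

lemma euler_rec: "eulerpoly n x + (\<Sum>k\<le>n. real (n choose k) * eulerpoly k x) = 2 * x ^ n"
proof -
  have "(\<Sum>k\<le>n. real (n choose k) * eulerpoly k x)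
     = (\<Sum>k<n. real (n choose k) * eulerpoly k x) + eulerpoly n x"
    by (simp add: lessThan_Suc_atMost[symmetric])
  moreover have "eulerpoly n x = x ^ n - (\<Sum>k<n. real (n choose k) * eulerpoly k x) / 2"
    by (rule eulerpoly_def2)
  ultimately show ?thesis by simp
qed

lemma bernpoly_deriv: "(bernpoly n has_real_derivative (real n * bernpoly (n - 1) x)) (at x)"
proof (induction n arbitrary: x rule: less_induct)
  case (less n)
  have eq: "bernpoly n = (\<lambda>x. ((real n + 1) * x ^ n
      - (\<Sum>k<n. real ((n + 1) choose k) * bernpoly k x)) / (real n + 1))"
    by (rule ext) (rule bernpoly_def2)
  have d: "((\<lambda>x. ((real n + 1) * x ^ n
      - (\<Sum>k<n. real ((n + 1) choose k) * bernpoly k x)) / (real n + 1)) has_real_derivative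
      (((real n + 1) * (real n * x ^ (n - 1)) - (\<Sum>k<n. real ((n + 1) choose k) * (real k * bernpoly (k - 1) x))) / (real n + 1))) (at x)"
  proof -
    have ds: "((\<lambda>x. \<Sum>k<n. real ((n + 1) choose k) * bernpoly k x) has_real_derivative
        (\<Sum>k<n. real ((n + 1) choose k) * (real k * bernpoly (k - 1) x))) (at x)"
      by (rule DERIV_sum, rule DERIV_cmult, rule less) auto
    have dp: "((\<lambda>x. (real n + 1) * x ^ n) has_real_derivative (real n + 1) * (real n * x ^ (n - 1))) (at x)"
      by (intro derivative_eq_intros) auto
    show ?thesis by (rule DERIV_cdivide[OF DERIV_diff[OF dp ds]])
  qed
  show ?case
  proof (cases n)
    case 0
    then show ?thesis using d eq by simp
  next
    case (Suc m)
    have s: "(\<Sum>k<n. real ((n + 1) choose k) * (real k * bernpoly (k - 1) x))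
       = (real m + 2) * (\<Sum>k<m. real ((m + 1) choose k) * bernpoly k x)"
    proof -
      have "(\<Sum>k<n. real ((n + 1) choose k) * (real k * bernpoly (k - 1) x))
          = (\<Sum>k<m. real ((Suc (Suc m)) choose (Suc k)) * (real (Suc k) * bernpoly k x))"
        unfolding Suc by (subst sum.lessThan_Suc_shift) simp
      also have "\<dots> = (\<Sum>k<m. (real m + 2) * (real ((m + 1) choose k) * bernpoly k x))"
      proof (rule sum.cong[OF refl])
        fix k
        have h: "real (Suc k) * real (Suc (Suc m) choose Suc k) = real (Suc (Suc m)) * real (Suc m choose k)"
          using arg_cong[OF Suc_times_binomial[where k=k and n="Suc m"], of real] by (simp only: of_nat_mult)
        have "real ((Suc (Suc m)) choose (Suc k)) * (real (Suc k) * bernpoly k x)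
            = (real (Suc k) * real (Suc (Suc m) choose Suc k)) * bernpoly k x" by (simp only: mult_ac)
        also have "\<dots> = real (Suc (Suc m)) * real (Suc m choose k) * bernpoly k x" by (simp only: h)
        finally show "real ((Suc (Suc m)) choose (Suc k)) * (real (Suc k) * bernpoly k x) = (real m + 2) * (real ((m + 1) choose k) * bernpoly k x)"
          by (simp add: algebra_simps del: binomial_Suc_Suc)
      qed
      finally show ?thesis by (simp add: sum_distrib_left)
    qed
    have "real n * bernpoly (n - 1) x = (((real n + 1) * (real n * x ^ (n - 1)) - (\<Sum>k<n. real ((n + 1) choose k) * (real k * bernpoly (k - 1) x))) / (real n + 1))"
      unfolding s using Suc by (subst bernpoly_def2) (simp add: field_simps)
    then show ?thesis using d eq by simp
  qed
qed

lemma eulerpoly_deriv: "(eulerpoly n has_real_derivative (real n * eulerpoly (n - 1) x)) (at x)"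
proof (induction n arbitrary: x rule: less_induct)
  case (less n)
  have eq: "eulerpoly n = (\<lambda>x. x ^ n
      - (\<Sum>k<n. real (n choose k) * eulerpoly k x) / 2)"
    by (rule ext) (rule eulerpoly_def2)
  have d: "((\<lambda>x. x ^ n
      - (\<Sum>k<n. real (n choose k) * eulerpoly k x) / 2) has_real_derivative
      (real n * x ^ (n - 1) - (\<Sum>k<n. real (n choose k) * (real k * eulerpoly (k - 1) x)) / 2)) (at x)"
  proof -
    have ds: "((\<lambda>x. \<Sum>k<n. real (n choose k) * eulerpoly k x) has_real_derivative
        (\<Sum>k<n. real (n choose k) * (real k * eulerpoly (k - 1) x))) (at x)"
      by (rule DERIV_sum, rule DERIV_cmult, rule less) auto
    have dp: "((\<lambda>x. x ^ n) has_real_derivative (real n * x ^ (n - 1))) (at x)"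
      by (intro derivative_eq_intros) auto
    show ?thesis by (rule DERIV_diff[OF dp DERIV_cdivide[OF ds]])
  qed
  show ?case
  proof (cases n)
    case 0
    then show ?thesis using d eq by simp
  next
    case (Suc m)
    have s: "(\<Sum>k<n. real (n choose k) * (real k * eulerpoly (k - 1) x))
       = (real m + 1) * (\<Sum>k<m. real (m choose k) * eulerpoly k x)"
    proof -
      have "(\<Sum>k<n. real (n choose k) * (real k * eulerpoly (k - 1) x))
          = (\<Sum>k<m. real ((Suc m) choose (Suc k)) * (real (Suc k) * eulerpoly k x))"
        unfolding Suc by (subst sum.lessThan_Suc_shift) simp
      also have "\<dots> = (\<Sum>k<m. (real m + 1) * (real (m choose k) * eulerpoly k x))"
      proof (rule sum.cong[OF refl])
        fix k
        have h: "real (Suc k) * real (Suc m choose Suc k) = real (Suc m) * real (m choose k)"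
          using arg_cong[OF Suc_times_binomial[where k=k and n=m], of real] by (simp only: of_nat_mult)
        have "real ((Suc m) choose (Suc k)) * (real (Suc k) * eulerpoly k x)
            = (real (Suc k) * real (Suc m choose Suc k)) * eulerpoly k x" by (simp only: mult_ac)
        also have "\<dots> = real (Suc m) * real (m choose k) * eulerpoly k x" by (simp only: h)
        finally show "real ((Suc m) choose (Suc k)) * (real (Suc k) * eulerpoly k x) = (real m + 1) * (real (m choose k) * eulerpoly k x)"
          by (simp add: algebra_simps del: binomial_Suc_Suc)
      qed
      finally show ?thesis by (simp add: sum_distrib_left)
    qed
    have "real n * eulerpoly (n - 1) x = real n * x ^ (n - 1) - (\<Sum>k<n. real (n choose k) * (real k * eulerpoly (k - 1) x)) / 2"
      unfolding s using Suc by (subst eulerpoly_def2) (simp add: field_simps)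
    then show ?thesis using d eq by simp
  qed
qed



lemma deriv_shift_var:
  assumes "\<And>t. (f has_real_derivative f' t) (at t)"
  shows "((\<lambda>h. f (x + h)) has_real_derivative f' (x + h)) (at h)"
proof -
  have "((\<lambda>h. f (h + x)) has_real_derivative f' (h + x)) (at h)"
    using assms[of "h + x"] DERIV_shift by blast
  then show ?thesis by (simp add: add.commute)
qed

lemma deriv_refl:
  assumes "\<And>t. (f has_real_derivative f' t) (at t)"
  shows "((\<lambda>x. f (1 - x)) has_real_derivative (- f' (1 - x))) (at x)"
proof -
  have d1: "((\<lambda>x. 1 - x) has_real_derivative (-1)) (at x)"
    by (intro derivative_eq_intros) auto
  show ?thesis using DERIV_chain'[OF d1 assms[of "1 - x"]] by simp
qed

lemma appell_transl:
  fixes F :: "nat \<Rightarrow> real \<Rightarrow> real"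
  assumes dF: "\<And>n t. (F n has_real_derivative (real n * F (n - 1) t)) (at t)"
  shows "F n (x + h) = (\<Sum>k\<le>n. real (n choose k) * F k x * h ^ (n - k))"
proof (induction n arbitrary: h)
  case 0
  have "\<forall>t. ((\<lambda>h. F 0 (x + h)) has_real_derivative 0) (at t)"
    using deriv_shift_var[of "F 0" "\<lambda>t. real 0 * F (0 - 1) t", OF dF] by simp
  from DERIV_isconst_all[OF this, of h 0] show ?case by simp
next
  case (Suc n)
  define \<phi> where "\<phi> = (\<lambda>h. F (Suc n) (x + h) - (\<Sum>k\<le>Suc n. real (Suc n choose k) * F k x * h ^ (Suc n - k)))"
  have d: "(\<phi> has_real_derivative 0) (at t)" for t
  proof -
    have d1: "((\<lambda>h. F (Suc n) (x + h)) has_real_derivative real (Suc n) * F n (x + t)) (at t)"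
      using deriv_shift_var[of "F (Suc n)" "\<lambda>t. real (Suc n) * F (Suc n - 1) t", OF dF] by simp
    have d2: "((\<lambda>h. \<Sum>k\<le>Suc n. real (Suc n choose k) * F k x * h ^ (Suc n - k)) has_real_derivative
        (\<Sum>k\<le>Suc n. real (Suc n choose k) * F k x * (real (Suc n - k) * t ^ (Suc n - k - 1)))) (at t)"
      by (rule DERIV_sum, rule DERIV_cmult, rule DERIV_pow[where n="Suc n - k" for k, unfolded One_nat_def[symmetric]])
    have s: "(\<Sum>k\<le>Suc n. real (Suc n choose k) * F k x * (real (Suc n - k) * t ^ (Suc n - k - 1)))
        = real (Suc n) * F n (x + t)"
    proof -
      have "(\<Sum>k\<le>Suc n. real (Suc n choose k) * F k x * (real (Suc n - k) * t ^ (Suc n - k - 1)))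
          = (\<Sum>k\<le>n. real (Suc n choose k) * F k x * (real (Suc n - k) * t ^ (Suc n - k - 1)))"
        by (simp add: sum.atMost_Suc)
      also have "\<dots> = (\<Sum>k\<le>n. real (Suc n) * (real (n choose k) * F k x * t ^ (n - k)))"
      proof (rule sum.cong[OF refl])
        fix k assume "k \<in> {..n}"
        then have kn: "k \<le> n" by simp
        have h: "real (Suc n - k) * real (Suc n choose k) = real (Suc n) * real (n choose k)"
          using arg_cong[OF binomial_absorb_comp[where n="Suc n" and k=k], of real] by (simp only: of_nat_mult diff_Suc_1)
        have e: "Suc n - k - 1 = n - k" using kn by simp
        show "real (Suc n choose k) * F k x * (real (Suc n - k) * t ^ (Suc n - k - 1)) = real (Suc n) * (real (n choose k) * F k x * t ^ (n - k))"
          unfolding e using h by (simp only: mult_ac) (metis mult.assoc mult.commute)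
      qed
      also have "\<dots> = real (Suc n) * F n (x + t)"
        by (simp add: Suc.IH sum_distrib_left)
      finally show ?thesis .
    qed
    show ?thesis unfolding \<phi>_def using DERIV_diff[OF d1 d2] s by simp
  qed
  have "\<phi> h = \<phi> 0" by (rule DERIV_isconst_all) (use d in auto)
  moreover have "\<phi> 0 = 0"
  proof -
    have "(\<Sum>k\<le>n. real (Suc n choose k) * F k x * 0 ^ (Suc n - k)) = 0"
      by (intro sum.neutral) (auto simp: Suc_diff_le)
    then show ?thesis unfolding \<phi>_def by (simp add: sum.atMost_Suc)
  qed
  ultimately show ?case unfolding \<phi>_def by simp
qed

lemma bern_diff: "bernpoly (Suc n) (x + 1) - bernpoly (Suc n) x = real (Suc n) * x ^ n"
proof -
  have "bernpoly (Suc n) (x + 1) = (\<Sum>k\<le>Suc n. real (Suc n choose k) * bernpoly k x * 1 ^ (Suc n - k))"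
    by (rule appell_transl[OF bernpoly_deriv])
  also have "\<dots> = (\<Sum>k\<le>n. real (Suc n choose k) * bernpoly k x) + bernpoly (Suc n) x"
    by (simp add: sum.atMost_Suc)
  finally show ?thesis using bern_rec[of n x] by simp
qed

lemma euler_diff: "eulerpoly n (x + 1) + eulerpoly n x = 2 * x ^ n"
proof -
  have "eulerpoly n (x + 1) = (\<Sum>k\<le>n. real (n choose k) * eulerpoly k x * 1 ^ (n - k))"
    by (rule appell_transl[OF eulerpoly_deriv])
  then show ?thesis using euler_rec[of n x] by simp
qed

lemma bernpoly_1: "bernpoly 1 x = x - 1/2"
  by (subst bernpoly_def2) simp

lemma euler_01: "n \<ge> 1 \<Longrightarrow> eulerpoly n 1 = - eulerpoly n 0"
  using euler_diff[of n 0] by (simp add: zero_power)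

lemma bern_01: "n \<noteq> 1 \<Longrightarrow> bernpoly n 1 = bernpoly n 0"
proof (cases n)
  case (Suc m)
  assume "n \<noteq> 1"
  then have "m \<ge> 1" using Suc by simp
  then show ?thesis using bern_diff[of m 0] Suc by (simp add: zero_power)
qed simp

lemma euler_sym: "eulerpoly n (1 - x) = (-1) ^ n * eulerpoly n x"
proof -
  define D where "D = (\<lambda>n x. (-1) ^ n * eulerpoly n (1 - x) - eulerpoly n x)"
  have dD: "(D n has_real_derivative real n * D (n - 1) t) (at t)" for n t
  proof (cases n)
    case 0
    then show ?thesis unfolding D_def by simp
  next
    case (Suc m)
    have "((\<lambda>x. eulerpoly n (1 - x)) has_real_derivative - (real n * eulerpoly (n - 1) (1 - t))) (at t)"
      by (rule deriv_refl[OF eulerpoly_deriv])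
    from DERIV_diff[OF DERIV_cmult[OF this, of "(-1)^n"] eulerpoly_deriv[of n t]]
    show ?thesis unfolding D_def using Suc by (simp add: algebra_simps)
  qed
  have "\<forall>x. D n x = 0"
  proof (induction n)
    case 0
    then show ?case unfolding D_def by simp
  next
    case (Suc n)
    have "\<forall>t. (D (Suc n) has_real_derivative 0) (at t)"
      using dD[of "Suc n"] Suc by simp
    then have c: "D (Suc n) x = D (Suc n) 0" for x by (rule DERIV_isconst_all)
    have "D (Suc n) 1 + D (Suc n) 0 = 0"
    proof -
      have e1: "eulerpoly (Suc n) 0 + eulerpoly (Suc n) 1 = 0" using euler_diff[of "Suc n" 0] by simp
      have e1': "eulerpoly (Suc n) 1 = - eulerpoly (Suc n) 0" using e1 by linarith
      show ?thesis unfolding D_def using e1' by simp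
    qed
    then show ?case using c[of 1] c by simp
  qed
  then have h: "(-1)^n * eulerpoly n (1 - x) = eulerpoly n x" unfolding D_def by simp
  show ?thesis using h by (cases "even n") auto
qed

lemma bern_sym: "bernpoly n (1 - x) = (-1) ^ n * bernpoly n x"
proof -
  define D where "D = (\<lambda>n x. (-1) ^ n * bernpoly n (1 - x) - bernpoly n x)"
  have dD: "(D n has_real_derivative real n * D (n - 1) t) (at t)" for n t
  proof (cases n)
    case 0
    then show ?thesis unfolding D_def by simp
  next
    case (Suc m)
    have "((\<lambda>x. bernpoly n (1 - x)) has_real_derivative - (real n * bernpoly (n - 1) (1 - t))) (at t)"
      by (rule deriv_refl[OF bernpoly_deriv])
    from DERIV_diff[OF DERIV_cmult[OF this, of "(-1)^n"] bernpoly_deriv[of n t]]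
    show ?thesis unfolding D_def using Suc by (simp add: algebra_simps)
  qed
  have per: "D (Suc n) (x + 1) = D (Suc n) x" for n x
  proof -
    have a: "bernpoly (Suc n) (x + 1) - bernpoly (Suc n) x = real (Suc n) * x ^ n" by (rule bern_diff)
    have b: "bernpoly (Suc n) (- x + 1) - bernpoly (Suc n) (- x) = real (Suc n) * (- x) ^ n" by (rule bern_diff)
    have e: "1 - (x + 1) = - x" "1 - x = - x + 1" by simp_all
    show ?thesis unfolding D_def e using a b
      by (simp add: algebra_simps power_minus')
  qed
  have "\<forall>x. D n x = 0"
  proof (induction n)
    case 0
    then show ?case unfolding D_def by simp
  next
    case (Suc n)
    have "\<forall>t. (D (Suc n) has_real_derivative 0) (at t)"
      using dD[of "Suc n"] Suc by simp
    then have c: "D (Suc n) x = D (Suc n) 0" for x by (rule DERIV_isconst_all)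
    have "\<And>t. (D (Suc (Suc n)) has_real_derivative real (Suc (Suc n)) * D (Suc n) 0) (at t)"
    proof -
      fix t
      show "(D (Suc (Suc n)) has_real_derivative real (Suc (Suc n)) * D (Suc n) 0) (at t)"
        using dD[of "Suc (Suc n)" t] c[of t] by simp
    qed
    from DERIV_const_ratio_const[of 0 1, OF _ this]
    have "D (Suc (Suc n)) 1 - D (Suc (Suc n)) 0 = real (Suc (Suc n)) * D (Suc n) 0" by simp
    moreover have "D (Suc (Suc n)) 1 = D (Suc (Suc n)) 0" using per[of "Suc n" 0] by simp
    ultimately have "D (Suc n) 0 = 0" by simp
    then show ?case using c by simp
  qed
  then have h: "(-1)^n * bernpoly n (1 - x) = bernpoly n x" unfolding D_def by simp
  show ?thesis using h by (cases "even n") auto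
qed



lemma m1powi: "(-1::real) powi k = (if even k then 1 else -1)"
  by (simp add: power_int_minus_left)

definition EL :: "nat \<Rightarrow> real \<Rightarrow> real" where
  "EL n X = (-1) powi (\<lceil>X\<rceil> - 1) * eulerpoly n (X - of_int \<lceil>X\<rceil> + 1)"

definition BL :: "nat \<Rightarrow> real \<Rightarrow> real" where
  "BL n X = bernpoly n (X - of_int \<lceil>X\<rceil> + 1)"

lemma ceil_nonint: "(X::real) \<notin> \<int> \<Longrightarrow> \<lceil>X\<rceil> = \<lfloor>X\<rfloor> + 1"
proof -
  assume X: "X \<notin> \<int>"
  have "of_int \<lfloor>X\<rfloor> \<noteq> X" using X by (metis Ints_of_int)
  then have "of_int \<lfloor>X\<rfloor> < X" using of_int_floor_le[of X] by linarith
  then show ?thesis by (subst ceiling_eq_iff) (use real_of_int_floor_add_one_gt[of X] in auto)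
qed

lemma EL_nonint: "X \<notin> \<int> \<Longrightarrow> EL n X = eulerfun n X"
  unfolding EL_def eulerfun_def by (simp add: ceil_nonint)

lemma BL_nonint: "X \<notin> \<int> \<Longrightarrow> BL n X = bernfun n X"
  unfolding BL_def bernfun_def by (simp add: ceil_nonint)

lemma eulerfun_neg: "eulerfun n (- X) = (-1) ^ (n + 1) * EL n X"
proof -
  have e: "X - of_int \<lceil>X\<rceil> + 1 = 1 - (- X + of_int \<lceil>X\<rceil>)" by simp
  show ?thesis
    unfolding eulerfun_def EL_def floor_minus e euler_sym
    by (simp add: m1powi)
qed

lemma bernfun_neg: "bernfun n (- X) = (-1) ^ n * BL n X"
proof -
  have e: "X - of_int \<lceil>X\<rceil> + 1 = 1 - (- X + of_int \<lceil>X\<rceil>)" by simp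
  show ?thesis
    unfolding bernfun_def BL_def floor_minus e bern_sym
    by simp
qed

lemma eulerfun_jump: "eulerfun n X - EL n X = (if n = 0 \<and> X \<in> \<int> then 2 * (-1) powi \<lfloor>X\<rfloor> else 0)"
proof (cases "X \<in> \<int>")
  case True
  then obtain k where k: "X = of_int k" by (auto elim: Ints_cases)
  show ?thesis
  proof (cases "n = 0")
    case True
    then show ?thesis unfolding eulerfun_def EL_def k by (simp add: m1powi)
  next
    case False
    then have "eulerpoly n 1 = - eulerpoly n 0" by (intro euler_01) simp
    then show ?thesis using False unfolding eulerfun_def EL_def k by (simp add: m1powi)
  qed
next
  case False
  then show ?thesis by (simp add: EL_nonint)
qed

lemma bernfun_jump: "bernfun n X - BL n X = (if n = 1 \<and> X \<in> \<int> then -1 else 0)"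
proof (cases "X \<in> \<int>")
  case True
  then obtain k where k: "X = of_int k" by (auto elim: Ints_cases)
  show ?thesis
  proof (cases "n = 1")
    case True
    then show ?thesis unfolding bernfun_def BL_def k using bernpoly_1[of 0] bernpoly_1[of 1] by simp
  next
    case False
    then have "bernpoly n 1 = bernpoly n 0" by (intro bern_01)
    then show ?thesis using False unfolding bernfun_def BL_def k by simp
  qed
next
  case False
  then show ?thesis by (simp add: BL_nonint)
qed

lemma eulerfun_shift: "eulerfun n (X + of_int m) = (-1) powi m * eulerfun n X"
  unfolding eulerfun_def by (simp add: m1powi)

lemma bernfun_shift: "bernfun n (X + of_int m) = bernfun n X"
  unfolding bernfun_def by simp

lemma eulerfun_floor: "\<lfloor>X\<rfloor> = \<alpha> \<Longrightarrow> eulerfun n X = (-1) powi \<alpha> * eulerpoly n (X - of_int \<alpha>)"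
  unfolding eulerfun_def by simp

lemma bernfun_floor: "\<lfloor>X\<rfloor> = \<alpha> \<Longrightarrow> bernfun n X = bernpoly n (X - of_int \<alpha>)"
  unfolding bernfun_def by simp

lemma EL_ceil: "\<lceil>X\<rceil> - 1 = \<alpha> \<Longrightarrow> EL n X = (-1) powi \<alpha> * eulerpoly n (X - of_int \<alpha>)"
  unfolding EL_def by (auto simp: algebra_simps)

lemma BL_ceil: "\<lceil>X\<rceil> - 1 = \<alpha> \<Longrightarrow> BL n X = bernpoly n (X - of_int \<alpha>)"
  unfolding BL_def by (auto simp: algebra_simps)



lemma S1: "(\<Sum>i\<le>P. real (P choose i) * r ^ (P - i) * (real i * T i))
  = real P * (\<Sum>i\<le>P - 1. real ((P - 1) choose i) * r ^ (P - 1 - i) * T (Suc i))"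
proof (cases P)
  case 0
  then show ?thesis by simp
next
  case (Suc P')
  have "(\<Sum>i\<le>P. real (P choose i) * r ^ (P - i) * (real i * T i))
      = (\<Sum>i\<le>P'. real (Suc P' choose Suc i) * r ^ (P' - i) * (real (Suc i) * T (Suc i)))"
    unfolding Suc by (subst sum.atMost_Suc_shift) simp
  also have "\<dots> = (\<Sum>i\<le>P'. real (Suc P') * (real (P' choose i) * r ^ (P' - i) * T (Suc i)))"
  proof (rule sum.cong[OF refl])
    fix i
    have h: "real (Suc i) * real (Suc P' choose Suc i) = real (Suc P') * real (P' choose i)"
      using arg_cong[OF Suc_times_binomial[where k=i and n=P'], of real] by (simp only: of_nat_mult)
    show "real (Suc P' choose Suc i) * r ^ (P' - i) * (real (Suc i) * T (Suc i))
        = real (Suc P') * (real (P' choose i) * r ^ (P' - i) * T (Suc i))"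
      using h by (metis (no_types, opaque_lifting) mult.assoc mult.commute)
  qed
  finally show ?thesis unfolding Suc by (simp add: sum_distrib_left del: of_nat_Suc)
qed

lemma S2: "(\<Sum>i\<le>P. real (P choose i) * r ^ (P - i) * (real (P - i) * T i))
  = real P * r * (\<Sum>i\<le>P - 1. real ((P - 1) choose i) * r ^ (P - 1 - i) * T i)"
proof (cases P)
  case 0
  then show ?thesis by simp
next
  case (Suc P')
  have "(\<Sum>i\<le>P. real (P choose i) * r ^ (P - i) * (real (P - i) * T i))
      = (\<Sum>i\<le>P'. real (Suc P' choose i) * r ^ (Suc P' - i) * (real (Suc P' - i) * T i))"
    unfolding Suc by (simp add: sum.atMost_Suc)
  also have "\<dots> = (\<Sum>i\<le>P'. real (Suc P') * r * (real (P' choose i) * r ^ (P' - i) * T i))"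
  proof (rule sum.cong[OF refl])
    fix i assume "i \<in> {..P'}"
    then have i: "i \<le> P'" by simp
    have h: "real (Suc P' - i) * real (Suc P' choose i) = real (Suc P') * real (P' choose i)"
      using arg_cong[OF binomial_absorb_comp[where n="Suc P'" and k=i], of real] by (simp only: of_nat_mult diff_Suc_1)
    have p: "r ^ (Suc P' - i) = r * r ^ (P' - i)" using i by (simp add: Suc_diff_le)
    show "real (Suc P' choose i) * r ^ (Suc P' - i) * (real (Suc P' - i) * T i)
        = real (Suc P') * r * (real (P' choose i) * r ^ (P' - i) * T i)"
      unfolding p using h by (metis (no_types, opaque_lifting) mult.assoc mult.commute)
  qed
  finally show ?thesis unfolding Suc by (simp add: sum_distrib_left del: of_nat_Suc)
qed



lemma comb_zero:
  fixes f g h :: "nat \<Rightarrow> real"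
  assumes ra: "c * r = - a" and sb: "c * s = - b"
  shows "(\<Sum>i\<le>P. \<Sum>j\<le>Q. real (P choose i) * real (Q choose j) * r ^ (P - i) * s ^ (Q - j) *
     (real i * f (i - 1) * a * g j * h (P + Q - i - j) + f i * (real j * g (j - 1) * b) * h (P + Q - i - j)
      + f i * g j * (real (P + Q - i - j) * h (P + Q - i - j - 1) * c))) = 0"
proof -
  define SA where "SA = (\<Sum>i\<le>P. real (P choose i) * r ^ (P - i) * (real i *
      (\<Sum>j\<le>Q. real (Q choose j) * s ^ (Q - j) * (f (i - 1) * a * g j * h (P + Q - i - j)))))"
  define SC1 where "SC1 = (\<Sum>i\<le>P. real (P choose i) * r ^ (P - i) * (real (P - i) *
      (\<Sum>j\<le>Q. real (Q choose j) * s ^ (Q - j) * (f i * g j * h (P + Q - i - j - 1) * c))))"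
  define SB where "SB = (\<Sum>i\<le>P. real (P choose i) * r ^ (P - i) *
      (\<Sum>j\<le>Q. real (Q choose j) * s ^ (Q - j) * (real j * (g (j - 1) * b * f i * h (P + Q - i - j)))))"
  define SC2 where "SC2 = (\<Sum>i\<le>P. real (P choose i) * r ^ (P - i) *
      (\<Sum>j\<le>Q. real (Q choose j) * s ^ (Q - j) * (real (Q - j) * (f i * g j * h (P + Q - i - j - 1) * c))))"
  have step1: "(\<Sum>i\<le>P. \<Sum>j\<le>Q. real (P choose i) * real (Q choose j) * r ^ (P - i) * s ^ (Q - j) *
     (real i * f (i - 1) * a * g j * h (P + Q - i - j) + f i * (real j * g (j - 1) * b) * h (P + Q - i - j)
      + f i * g j * (real (P + Q - i - j) * h (P + Q - i - j - 1) * c)))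
    = (\<Sum>i\<le>P. \<Sum>j\<le>Q.
        real (P choose i) * r ^ (P - i) * (real i * (real (Q choose j) * s ^ (Q - j) * (f (i - 1) * a * g j * h (P + Q - i - j))))
      + real (P choose i) * r ^ (P - i) * (real (P - i) * (real (Q choose j) * s ^ (Q - j) * (f i * g j * h (P + Q - i - j - 1) * c)))
      + real (P choose i) * r ^ (P - i) * (real (Q choose j) * s ^ (Q - j) * (real j * (g (j - 1) * b * f i * h (P + Q - i - j))))
      + real (P choose i) * r ^ (P - i) * (real (Q choose j) * s ^ (Q - j) * (real (Q - j) * (f i * g j * h (P + Q - i - j - 1) * c))))"
  proof (intro sum.cong refl)
    fix i j assume "i \<in> {..P}" "j \<in> {..Q}"
    then have "real (P + Q - i - j) = real (P - i) + real (Q - j)" by auto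
    then show "real (P choose i) * real (Q choose j) * r ^ (P - i) * s ^ (Q - j) *
     (real i * f (i - 1) * a * g j * h (P + Q - i - j) + f i * (real j * g (j - 1) * b) * h (P + Q - i - j)
      + f i * g j * (real (P + Q - i - j) * h (P + Q - i - j - 1) * c)) =
        real (P choose i) * r ^ (P - i) * (real i * (real (Q choose j) * s ^ (Q - j) * (f (i - 1) * a * g j * h (P + Q - i - j))))
      + real (P choose i) * r ^ (P - i) * (real (P - i) * (real (Q choose j) * s ^ (Q - j) * (f i * g j * h (P + Q - i - j - 1) * c)))
      + real (P choose i) * r ^ (P - i) * (real (Q choose j) * s ^ (Q - j) * (real j * (g (j - 1) * b * f i * h (P + Q - i - j))))
      + real (P choose i) * r ^ (P - i) * (real (Q choose j) * s ^ (Q - j) * (real (Q - j) * (f i * g j * h (P + Q - i - j - 1) * c)))"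
      by (simp add: algebra_simps)
  qed
  have step2: "\<dots> = SA + SC1 + SB + SC2"
    unfolding SA_def SC1_def SB_def SC2_def by (simp only: sum.distrib sum_distrib_left)
  define E where "E = (\<lambda>i. \<Sum>j\<le>Q. real (Q choose j) * s ^ (Q - j) * (f i * g j * h (P + Q - Suc i - j)))"
  have SA: "SA = real P * (\<Sum>i\<le>P - 1. real ((P - 1) choose i) * r ^ (P - 1 - i) * (a * E i))"
    unfolding SA_def E_def by (subst S1) (simp add: sum_distrib_left algebra_simps)
  have SC1: "SC1 = real P * r * (\<Sum>i\<le>P - 1. real ((P - 1) choose i) * r ^ (P - 1 - i) * (c * E i))"
    unfolding SC1_def E_def by (subst S2) (simp add: sum_distrib_left algebra_simps)
  have A0: "SA + SC1 = 0"
  proof -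
    have "SA + SC1 = real P * (a + c * r) * (\<Sum>i\<le>P - 1. real ((P - 1) choose i) * r ^ (P - 1 - i) * E i)"
      unfolding SA SC1 by (simp add: sum_distrib_left sum.distrib[symmetric] algebra_simps)
    then show ?thesis using ra by simp
  qed
  define E2 where "E2 = (\<lambda>i. \<Sum>j\<le>Q - 1. real ((Q - 1) choose j) * s ^ (Q - 1 - j) * (f i * g j * h (P + Q - i - Suc j)))"
  have B0: "SB + SC2 = 0"
  proof -
    have "SB + SC2 = (\<Sum>i\<le>P. real (P choose i) * r ^ (P - i) * (real Q * (b + c * s) * E2 i))"
    proof -
      have "SB + SC2 = (\<Sum>i\<le>P. real (P choose i) * r ^ (P - i) *
         ((\<Sum>j\<le>Q. real (Q choose j) * s ^ (Q - j) * (real j * (g (j - 1) * b * f i * h (P + Q - i - j))))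
        + (\<Sum>j\<le>Q. real (Q choose j) * s ^ (Q - j) * (real (Q - j) * (f i * g j * h (P + Q - i - j - 1) * c)))))"
        unfolding SB_def SC2_def by (simp add: sum.distrib algebra_simps)
      also have "\<dots> = (\<Sum>i\<le>P. real (P choose i) * r ^ (P - i) * (real Q * (b + c * s) * E2 i))"
      proof (rule sum.cong[OF refl])
        fix i
        have u1: "(\<Sum>j\<le>Q. real (Q choose j) * s ^ (Q - j) * (real j * (g (j - 1) * b * f i * h (P + Q - i - j))))
            = real Q * (\<Sum>j\<le>Q - 1. real ((Q - 1) choose j) * s ^ (Q - 1 - j) * (b * (f i * g j * h (P + Q - i - Suc j))))"
          by (subst S1) (simp add: algebra_simps)
        have u2: "(\<Sum>j\<le>Q. real (Q choose j) * s ^ (Q - j) * (real (Q - j) * (f i * g j * h (P + Q - i - j - 1) * c)))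
            = real Q * s * (\<Sum>j\<le>Q - 1. real ((Q - 1) choose j) * s ^ (Q - 1 - j) * (c * (f i * g j * h (P + Q - i - Suc j))))"
          by (subst S2) (simp add: algebra_simps)
        show "real (P choose i) * r ^ (P - i) *
         ((\<Sum>j\<le>Q. real (Q choose j) * s ^ (Q - j) * (real j * (g (j - 1) * b * f i * h (P + Q - i - j))))
        + (\<Sum>j\<le>Q. real (Q choose j) * s ^ (Q - j) * (real (Q - j) * (f i * g j * h (P + Q - i - j - 1) * c))))
          = real (P choose i) * r ^ (P - i) * (real Q * (b + c * s) * E2 i)"
          unfolding u1 u2 E2_def by (simp add: sum_distrib_left sum.distrib[symmetric] algebra_simps)
      qed
      finally show ?thesis .
    qed
    then show ?thesis using sb by simp
  qed
  show ?thesis using step1 step2 A0 B0 by simp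
qed



definition Phi3 :: "nat \<Rightarrow> nat \<Rightarrow> real \<Rightarrow> real \<Rightarrow> (nat \<Rightarrow> real) \<Rightarrow> (nat \<Rightarrow> real) \<Rightarrow> (nat \<Rightarrow> real) \<Rightarrow> real" where
  "Phi3 P Q r s fa fb fc = (\<Sum>i\<le>P. \<Sum>j\<le>Q. real (P choose i) * real (Q choose j) * r ^ (P - i) * s ^ (Q - j) *
      (fa i * fb j * fc (P + Q - i - j)))"

lemma lin_chain:
  assumes "\<And>n t. (F n has_real_derivative real n * F (n - 1) t) (at t)"
  shows "((\<lambda>w. F n (a * w + x)) has_real_derivative (real n * F (n - 1) (a * w + x)) * a) (at w)"
proof -
  have "((\<lambda>w. a * w + x) has_real_derivative a) (at w)" by (intro derivative_eq_intros) auto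
  from DERIV_chain'[OF this assms] show ?thesis .
qed

lemma Phi3_deriv0:
  fixes F G H :: "nat \<Rightarrow> real \<Rightarrow> real"
  assumes dF: "\<And>n t. (F n has_real_derivative real n * F (n - 1) t) (at t)"
    and dG: "\<And>n t. (G n has_real_derivative real n * G (n - 1) t) (at t)"
    and dH: "\<And>n t. (H n has_real_derivative real n * H (n - 1) t) (at t)"
    and c: "c \<noteq> 0"
  shows "((\<lambda>w. Phi3 P Q (-a/c) (-b/c) (\<lambda>i. F i (a*w+x)) (\<lambda>j. G j (b*w+y)) (\<lambda>l. H l (c*w+z)))
     has_real_derivative 0) (at w)"
proof -
  define r where "r = -a/c"
  define s where "s = -b/c"
  define K where "K = (\<lambda>i j. real (P choose i) * real (Q choose j) * r ^ (P - i) * s ^ (Q - j))"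
  have tm: "((\<lambda>w. K i j * (F i (a*w+x) * G j (b*w+y) * H l (c*w+z))) has_real_derivative
      K i j * (real i * F (i - 1) (a*w+x) * a * G j (b*w+y) * H l (c*w+z)
       + F i (a*w+x) * (real j * G (j - 1) (b*w+y) * b) * H l (c*w+z)
       + F i (a*w+x) * G j (b*w+y) * (real l * H (l - 1) (c*w+z) * c))) (at w)" for i j l
  proof -
    note d = DERIV_cmult[OF DERIV_mult[OF DERIV_mult[OF lin_chain[OF dF, where n=i and a=a and w=w and x=x]
       lin_chain[OF dG, where n=j and a=b and w=w and x=y]] lin_chain[OF dH, where n=l and a=c and w=w and x=z]], of "K i j"]
    show ?thesis using d by (simp add: algebra_simps)
  qed
  have dsum: "((\<lambda>w. \<Sum>i\<le>P. \<Sum>j\<le>Q. K i j * (F i (a*w+x) * G j (b*w+y) * H (P + Q - i - j) (c*w+z))) has_real_derivative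
      (\<Sum>i\<le>P. \<Sum>j\<le>Q. K i j * (real i * F (i - 1) (a*w+x) * a * G j (b*w+y) * H (P + Q - i - j) (c*w+z)
       + F i (a*w+x) * (real j * G (j - 1) (b*w+y) * b) * H (P + Q - i - j) (c*w+z)
       + F i (a*w+x) * G j (b*w+y) * (real (P + Q - i - j) * H (P + Q - i - j - 1) (c*w+z) * c)))) (at w)"
    by (rule DERIV_sum, rule DERIV_sum, rule tm)
  have z: "(\<Sum>i\<le>P. \<Sum>j\<le>Q. K i j * (real i * F (i - 1) (a*w+x) * a * G j (b*w+y) * H (P + Q - i - j) (c*w+z)
       + F i (a*w+x) * (real j * G (j - 1) (b*w+y) * b) * H (P + Q - i - j) (c*w+z)
       + F i (a*w+x) * G j (b*w+y) * (real (P + Q - i - j) * H (P + Q - i - j - 1) (c*w+z) * c))) = 0"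
    unfolding K_def
    by (rule comb_zero[of c r a s b P Q "\<lambda>i. F i (a*w+x)" "\<lambda>j. G j (b*w+y)" "\<lambda>l. H l (c*w+z)"])
       (use c in \<open>simp_all add: r_def s_def\<close>)
  note d0 = dsum[unfolded z]
  show ?thesis using d0 unfolding Phi3_def K_def r_def s_def by simp
qed

lemma Phi3_const:
  fixes F G H :: "nat \<Rightarrow> real \<Rightarrow> real"
  assumes dF: "\<And>n t. (F n has_real_derivative real n * F (n - 1) t) (at t)"
    and dG: "\<And>n t. (G n has_real_derivative real n * G (n - 1) t) (at t)"
    and dH: "\<And>n t. (H n has_real_derivative real n * H (n - 1) t) (at t)"
    and c: "c \<noteq> 0"
  shows "Phi3 P Q (-a/c) (-b/c) (\<lambda>i. F i (a*w1+x)) (\<lambda>j. G j (b*w1+y)) (\<lambda>l. H l (c*w1+z))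
       = Phi3 P Q (-a/c) (-b/c) (\<lambda>i. F i (a*w2+x)) (\<lambda>j. G j (b*w2+y)) (\<lambda>l. H l (c*w2+z))"
  using DERIV_isconst_all[of "\<lambda>w. Phi3 P Q (-a/c) (-b/c) (\<lambda>i. F i (a*w+x)) (\<lambda>j. G j (b*w+y)) (\<lambda>l. H l (c*w+z))" w1 w2]
    Phi3_deriv0[OF dF dG dH c] by blast

lemma Phi3_diff_c: "Phi3 P Q r s fa fb fc - Phi3 P Q r s fa fb fc' = Phi3 P Q r s fa fb (\<lambda>l. fc l - fc' l)"
  unfolding Phi3_def by (simp add: sum_subtractf[symmetric] algebra_simps)

lemma Phi3_diff_b: "Phi3 P Q r s fa fb fc - Phi3 P Q r s fa fb' fc = Phi3 P Q r s fa (\<lambda>l. fb l - fb' l) fc"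
  unfolding Phi3_def by (simp add: sum_subtractf[symmetric] algebra_simps)

lemma Phi3_diff_a: "Phi3 P Q r s fa fb fc - Phi3 P Q r s fa' fb fc = Phi3 P Q r s (\<lambda>l. fa l - fa' l) fb fc"
  unfolding Phi3_def by (simp add: sum_subtractf[symmetric] algebra_simps)

lemma Phi3_delta_c: "Phi3 P Q r s fa fb (\<lambda>l. if l = 0 then d else 0) = fa P * fb Q * d"
proof -
  have "Phi3 P Q r s fa fb (\<lambda>l. if l = 0 then d else 0)
     = (\<Sum>i\<le>P. \<Sum>j\<le>Q. (if j = Q then (if i = P then fa P * fb Q * d else 0) else 0))"
    unfolding Phi3_def by (intro sum.cong refl) auto
  then show ?thesis by simp
qed

lemma Phi3_delta_b:
  assumes "Q \<ge> 1"
  shows "Phi3 P Q r s fa (\<lambda>j. if j = 1 then d else 0) fc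
    = d * (\<Sum>i\<le>P. real (P choose i) * real Q * r ^ (P - i) * s ^ (Q - 1) * (fa i * fc (P + Q - i - 1)))"
proof -
  have "Phi3 P Q r s fa (\<lambda>j. if j = 1 then d else 0) fc
     = (\<Sum>i\<le>P. \<Sum>j\<le>Q. (if j = 1 then d * (real (P choose i) * real Q * r ^ (P - i) * s ^ (Q - 1) * (fa i * fc (P + Q - i - 1))) else 0))"
    unfolding Phi3_def by (intro sum.cong refl) auto
  then show ?thesis using assms by (simp add: sum_distrib_left)
qed

lemma Phi3_delta_a:
  shows "Phi3 P Q r s (\<lambda>i. if i = 0 then d else 0) fb fc
    = d * (\<Sum>j\<le>Q. real (Q choose j) * r ^ P * s ^ (Q - j) * (fb j * fc (P + Q - j)))"
proof -
  have "Phi3 P Q r s (\<lambda>i. if i = 0 then d else 0) fb fc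
     = (\<Sum>i\<le>P. (if i = 0 then (\<Sum>j\<le>Q. d * (real (Q choose j) * r ^ P * s ^ (Q - j) * (fb j * fc (P + Q - j)))) else 0))"
    unfolding Phi3_def by (intro sum.cong refl) (auto intro!: sum.cong)
  then show ?thesis by (simp add: sum_distrib_left)
qed



lemma telescope:
  fixes f g :: "real \<Rightarrow> real" and K :: "real set"
  assumes fin: "finite K"
  shows "u < v \<Longrightarrow> (\<forall>s t. u \<le> s \<longrightarrow> s < t \<longrightarrow> t \<le> v \<longrightarrow> {s<..<t} \<inter> K = {} \<longrightarrow> f s = g t)
    \<Longrightarrow> (\<Sum>k\<in>K \<inter> {u<..<v}. f k - g k) = g v - f u"
proof (induction "card (K \<inter> {u<..<v})" arbitrary: v rule: less_induct)
  case less
  show ?case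
  proof (cases "K \<inter> {u<..<v} = {}")
    case True
    then have "f u = g v" using less.prems by (auto simp: Int_commute)
    then show ?thesis using True by simp
  next
    case False
    have fin': "finite (K \<inter> {u<..<v})" using fin by simp
    define m where "m = Max (K \<inter> {u<..<v})"
    have mK: "m \<in> K \<inter> {u<..<v}" unfolding m_def using Max_in[OF fin' False] .
    have mmax: "\<And>k. k \<in> K \<inter> {u<..<v} \<Longrightarrow> k \<le> m" unfolding m_def using Max_ge[OF fin'] by blast
    have split: "K \<inter> {u<..<v} = insert m (K \<inter> {u<..<m})"
      using mK mmax by force
    have mn: "m \<notin> K \<inter> {u<..<m}" by simp
    have fin2: "finite (K \<inter> {u<..<m})" using fin by simp
    have card: "card (K \<inter> {u<..<m}) < card (K \<inter> {u<..<v})"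
      unfolding split using card_insert_disjoint[OF fin2 mn] by simp
    have um: "u < m" using mK by simp
    have hyp: "\<forall>s t. u \<le> s \<longrightarrow> s < t \<longrightarrow> t \<le> m \<longrightarrow> {s<..<t} \<inter> K = {} \<longrightarrow> f s = g t"
      using less.prems(2) mK by auto
    have IH: "(\<Sum>k\<in>K \<inter> {u<..<m}. f k - g k) = g m - f u"
      using less.hyps[OF card um hyp] .
    have fm: "f m = g v"
    proof -
      have "{m<..<v} \<inter> K = {}" using mmax mK by force
      then show ?thesis using less.prems(2) mK by auto
    qed
    have "(\<Sum>k\<in>K \<inter> {u<..<v}. f k - g k) = (f m - g m) + (\<Sum>k\<in>K \<inter> {u<..<m}. f k - g k)"
      unfolding split using sum.insert[OF fin2 mn] by simp
    then show ?thesis using IH fm by simp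
  qed
qed

lemma window_shift1:
  fixes g :: "int \<Rightarrow> real" and m :: int
  assumes m: "m > 0" and per: "\<And>k. g (k + m) = g k"
  shows "(\<Sum>k\<in>{n+1..<n+1+m}. g k) = (\<Sum>k\<in>{n..<n+m}. g k)"
proof -
  have e1: "{n..<n+m} = insert n {n+1..<n+m}" using m by auto
  have e2: "{n+1..<n+1+m} = insert (n+m) {n+1..<n+m}" using m by auto
  show ?thesis unfolding e1 e2 using per[of n] by simp
qed

lemma window_sum:
  fixes g :: "int \<Rightarrow> real" and m :: int
  assumes m: "m > 0" and per: "\<And>k. g (k + m) = g k"
  shows "(\<Sum>k\<in>{n..<n+m}. g k) = (\<Sum>k\<in>{0..<m}. g k)"
proof (induction n rule: int_induct[where k=0])
  case base
  then show ?case by simp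
next
  case (step1 i)
  then show ?case using window_shift1[where g=g and m=m and n=i, OF m per] by simp
next
  case (step2 i)
  then show ?case using window_shift1[where g=g and m=m and n="i - 1", OF m per] by simp
qed

lemma window_neg:
  fixes g :: "int \<Rightarrow> real" and m :: int
  assumes m: "m > 0" and per: "\<And>k. g (k + m) = g k"
  shows "(\<Sum>k\<in>{0..<m}. g (- k)) = (\<Sum>k\<in>{0..<m}. g k)"
proof -
  have "(\<Sum>k\<in>{0..<m}. g (- k)) = (\<Sum>k\<in>{1-m..<1-m+m}. g k)"
    by (rule sum.reindex_bij_witness[of _ "\<lambda>k. - k" "\<lambda>k. - k"]) auto
  also have "\<dots> = (\<Sum>k\<in>{0..<m}. g k)" by (rule window_sum[where g=g and m=m, OF m per])
  finally show ?thesis .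
qed

lemma nat_int_sum:
  fixes c :: int and F :: "int \<Rightarrow> real"
  shows "(\<Sum>\<mu>\<in>{0..<nat c}. F (int \<mu>)) = (\<Sum>k\<in>{0..<c}. F k)"
  by (rule sum.reindex_bij_witness[of _ "\<lambda>k. nat k" "\<lambda>\<mu>. int \<mu>"]) auto



lemma appell_shift:
  assumes "\<And>n t. (F n has_real_derivative real n * F (n - 1) t) (at t)"
  shows "((\<lambda>t. k * F n (t - d)) has_real_derivative real n * (k * F (n - 1) (t - d))) (at t)"
proof -
  have "((\<lambda>t. F n (t + - d)) has_real_derivative real n * F (n - 1) (t + - d)) (at t)"
    using assms[of n "t + - d"] DERIV_shift by blast
  from DERIV_cmult[OF this, of k] show ?thesis by (simp add: algebra_simps)
qed

lemma lin_pts_finite: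
  fixes \<alpha> \<beta> u v :: real
  assumes "\<alpha> > 0"
  shows "finite {w. u < w \<and> w < v \<and> \<alpha> * w + \<beta> \<in> \<int>}"
proof (rule finite_subset)
  show "{w. u < w \<and> w < v \<and> \<alpha> * w + \<beta> \<in> \<int>} \<subseteq> (\<lambda>k. (of_int k - \<beta>) / \<alpha>) ` {\<lfloor>\<alpha>*u+\<beta>\<rfloor>..\<lceil>\<alpha>*v+\<beta>\<rceil>}"
  proof
    fix w assume w: "w \<in> {w. u < w \<and> w < v \<and> \<alpha> * w + \<beta> \<in> \<int>}"
    then obtain k where k: "\<alpha> * w + \<beta> = of_int k" by (auto elim: Ints_cases)
    have "\<alpha> * u < \<alpha> * w" "\<alpha> * w < \<alpha> * v" using w assms by auto
    then have "\<alpha>*u+\<beta> < of_int k" "of_int k < \<alpha>*v+\<beta>" using k by auto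
    then have k1: "\<lfloor>\<alpha>*u+\<beta>\<rfloor> < k" by (simp add: floor_less_iff)
    have "of_int k < (of_int \<lceil>\<alpha>*v+\<beta>\<rceil> :: real)"
      using \<open>of_int k < \<alpha>*v+\<beta>\<close> le_of_int_ceiling[of "\<alpha>*v+\<beta>"] by linarith
    then have k2: "k < \<lceil>\<alpha>*v+\<beta>\<rceil>" by (simp only: of_int_less_iff)
    from k1 k2 have "\<lfloor>\<alpha>*u+\<beta>\<rfloor> \<le> k" "k \<le> \<lceil>\<alpha>*v+\<beta>\<rceil>" by simp_all
    moreover have "w = (of_int k - \<beta>) / \<alpha>" using k assms by (auto simp: field_simps)
    ultimately show "w \<in> (\<lambda>k. (of_int k - \<beta>) / \<alpha>) ` {\<lfloor>\<alpha>*u+\<beta>\<rfloor>..\<lceil>\<alpha>*v+\<beta>\<rceil>}" by auto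
  qed
qed simp

lemma lin_pts_window:
  fixes \<beta> u :: real and m :: int
  assumes m: "m > 0" and nonint: "of_int m * u + \<beta> \<notin> \<int>"
  shows "{w. u < w \<and> w < u + 1 \<and> of_int m * w + \<beta> \<in> \<int>}
       = (\<lambda>k. (of_int k - \<beta>) / of_int m) ` {\<lfloor>of_int m * u + \<beta>\<rfloor> + 1..<\<lfloor>of_int m * u + \<beta>\<rfloor> + 1 + m}"
    (is "?L = ?R")
proof
  define X where "X = of_int m * u + \<beta>"
  have mr: "(of_int m :: real) > 0" using m by simp
  have fl: "of_int \<lfloor>X\<rfloor> < X" using nonint unfolding X_def
    by (metis Ints_of_int of_int_floor_le less_le)
  have fl2: "X < of_int \<lfloor>X\<rfloor> + 1" by (rule real_of_int_floor_add_one_gt)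
  show "?L \<subseteq> ?R"
  proof
    fix w assume w: "w \<in> ?L"
    then obtain k where k: "of_int m * w + \<beta> = of_int k" by (auto elim: Ints_cases)
    have "of_int m * u < of_int m * w" "of_int m * w < of_int m * (u + 1)" using w mr by auto
    then have "X < of_int k" "of_int k < X + of_int m" using k unfolding X_def by (auto simp: algebra_simps)
    then have a1: "\<lfloor>X\<rfloor> < k" by (simp add: floor_less_iff)
    have "(of_int k :: real) < of_int (\<lfloor>X\<rfloor> + 1 + m)" using \<open>of_int k < X + of_int m\<close> fl2 by simp linarith
    then have a2: "k < \<lfloor>X\<rfloor> + 1 + m" by (simp only: of_int_less_iff)
    from a1 a2 have "\<lfloor>X\<rfloor> + 1 \<le> k" "k < \<lfloor>X\<rfloor> + 1 + m" by simp_all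
    moreover have "w = (of_int k - \<beta>) / of_int m" using k mr by (auto simp: field_simps)
    ultimately show "w \<in> ?R" unfolding X_def by auto
  qed
  show "?R \<subseteq> ?L"
  proof
    fix w assume "w \<in> ?R"
    then obtain k where k: "\<lfloor>X\<rfloor> + 1 \<le> k" "k < \<lfloor>X\<rfloor> + 1 + m" and w: "w = (of_int k - \<beta>) / of_int m"
      unfolding X_def by auto
    have "(of_int (\<lfloor>X\<rfloor> + 1) :: real) \<le> of_int k" using k(1) by (simp only: of_int_le_iff)
    then have k1: "X < of_int k" using fl2 by simp linarith
    have "k \<le> \<lfloor>X\<rfloor> + m" using k(2) by simp
    then have "(of_int k :: real) \<le> of_int (\<lfloor>X\<rfloor> + m)" by (simp only: of_int_le_iff)
    then have k2: "of_int k < X + of_int m" using fl by simp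
    have e: "of_int m * w + \<beta> = of_int k" using w mr by (auto simp: field_simps)
    have "of_int m * u < of_int m * w" using k1 e unfolding X_def by linarith
    then have uw: "u < w" using mr by simp
    have "of_int m * w < of_int m * (u + 1)" using k2 e unfolding X_def by (simp add: algebra_simps)
    then have "w < u + 1" using mr by simp
    note uw this
    then show "w \<in> ?L" using e by auto
  qed
qed

lemma no_cross:
  fixes \<alpha> \<beta> s t :: real
  assumes a: "\<alpha> > 0" and st: "s < t" and nc: "\<forall>w. s < w \<and> w < t \<longrightarrow> \<alpha> * w + \<beta> \<notin> \<int>"
  shows "\<lceil>\<alpha> * t + \<beta>\<rceil> - 1 = \<lfloor>\<alpha> * s + \<beta>\<rfloor>"
proof -
  define n where "n = \<lfloor>\<alpha> * s + \<beta>\<rfloor>"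
  have "\<alpha> * s < \<alpha> * t" using a st by simp
  then have lo: "of_int n < \<alpha> * t + \<beta>" unfolding n_def using of_int_floor_le[of "\<alpha> * s + \<beta>"] by linarith
  have hi: "\<alpha> * t + \<beta> \<le> of_int n + 1"
  proof (rule ccontr)
    assume "\<not> ?thesis"
    then have h: "of_int n + 1 < \<alpha> * t + \<beta>" by simp
    define w where "w = (of_int n + 1 - \<beta>) / \<alpha>"
    have ew: "\<alpha> * w + \<beta> = of_int (n + 1)" unfolding w_def using a by (simp add: field_simps)
    have "\<alpha> * s + \<beta> < of_int n + 1" unfolding n_def by (rule real_of_int_floor_add_one_gt)
    then have "\<alpha> * s < \<alpha> * w" "\<alpha> * w < \<alpha> * t" using ew h by auto
    then have "s < w" "w < t" using a by auto
    then show False using nc ew by (metis Ints_of_int)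
  qed
  have "\<lceil>\<alpha> * t + \<beta>\<rceil> = n + 1" using lo hi by (subst ceiling_eq_iff) simp
  then show ?thesis unfolding n_def by simp
qed



lemma sign_cancel:
  fixes a c :: int
  assumes "even (a + c)"
  shows "(-1::real) powi a * (-1) powi c = 1" "(-1::real) powi c * (-1) powi (- a) = 1"
  using assms by (auto simp: m1powi)

lemma between_eq:
  fixes a b c :: int and x y z s t :: real
  assumes a: "a > 0" and b: "b > 0" and c: "c > 0" and st: "s < t"
    and nA: "\<forall>w. s < w \<and> w < t \<longrightarrow> of_int a * w + x \<notin> \<int>"
    and nB: "\<forall>w. s < w \<and> w < t \<longrightarrow> of_int b * w + y \<notin> \<int>"
    and nC: "\<forall>w. s < w \<and> w < t \<longrightarrow> of_int c * w + - z \<notin> \<int>"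
  shows "Phi3 P Q (- of_int a / of_int c) (- of_int b / of_int c)
      (\<lambda>i. eulerfun i (of_int a * s + x)) (\<lambda>j. bernfun j (of_int b * s + y)) (\<lambda>l. eulerfun l (of_int c * s + - z))
    = Phi3 P Q (- of_int a / of_int c) (- of_int b / of_int c)
      (\<lambda>i. EL i (of_int a * t + x)) (\<lambda>j. BL j (of_int b * t + y)) (\<lambda>l. EL l (of_int c * t + - z))"
proof -
  define \<alpha> where "\<alpha> = \<lfloor>of_int a * s + x\<rfloor>"
  define \<beta> where "\<beta> = \<lfloor>of_int b * s + y\<rfloor>"
  define \<gamma> where "\<gamma> = \<lfloor>of_int c * s + - z\<rfloor>"
  have cA: "\<lceil>of_int a * t + x\<rceil> - 1 = \<alpha>" unfolding \<alpha>_def by (rule no_cross) (use a st nA in auto)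
  have cB: "\<lceil>of_int b * t + y\<rceil> - 1 = \<beta>" unfolding \<beta>_def by (rule no_cross) (use b st nB in auto)
  have cC: "\<lceil>of_int c * t + - z\<rceil> - 1 = \<gamma>" unfolding \<gamma>_def by (rule no_cross) (use c st nC in auto)
  define F where "F = (\<lambda>n t'. (-1) powi \<alpha> * eulerpoly n (t' - of_int \<alpha>))"
  define G where "G = (\<lambda>n t'. 1 * bernpoly n (t' - of_int \<beta>))"
  define H where "H = (\<lambda>n t'. (-1) powi \<gamma> * eulerpoly n (t' - of_int \<gamma>))"
  have dF: "\<And>n t. (F n has_real_derivative real n * F (n - 1) t) (at t)"
    unfolding F_def by (rule appell_shift[OF eulerpoly_deriv])
  have dG: "\<And>n t. (G n has_real_derivative real n * G (n - 1) t) (at t)"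
    unfolding G_def by (rule appell_shift[OF bernpoly_deriv])
  have dH: "\<And>n t. (H n has_real_derivative real n * H (n - 1) t) (at t)"
    unfolding H_def by (rule appell_shift[OF eulerpoly_deriv])
  have L: "(\<lambda>i. eulerfun i (of_int a * s + x)) = (\<lambda>i. F i (of_int a * s + x))"
          "(\<lambda>j. bernfun j (of_int b * s + y)) = (\<lambda>j. G j (of_int b * s + y))"
          "(\<lambda>l. eulerfun l (of_int c * s + - z)) = (\<lambda>l. H l (of_int c * s + - z))"
    unfolding F_def G_def H_def
    by (auto intro!: ext eulerfun_floor bernfun_floor simp: \<alpha>_def \<beta>_def \<gamma>_def)
  have R: "(\<lambda>i. EL i (of_int a * t + x)) = (\<lambda>i. F i (of_int a * t + x))"
          "(\<lambda>j. BL j (of_int b * t + y)) = (\<lambda>j. G j (of_int b * t + y))"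
          "(\<lambda>l. EL l (of_int c * t + - z)) = (\<lambda>l. H l (of_int c * t + - z))"
    unfolding F_def G_def H_def using cA cB cC
    by (auto intro!: ext EL_ceil BL_ceil)
  show ?thesis unfolding L R
    by (rule Phi3_const[OF dF dG dH]) (use c in simp)
qed

lemma EL_via_neg: "EL n X = (-1) ^ (n + 1) * eulerfun n (- X)"
  unfolding eulerfun_neg by (simp add: power_add)

lemma BL_via_neg: "BL n X = (-1) ^ n * bernfun n (- X)"
  unfolding bernfun_neg by (simp flip: power_mult_distrib)



lemma sumC:
  fixes a b c :: int and x y z u :: real
  assumes a: "a > 0" and b: "b > 0" and c: "c > 0" and ac: "even (a + c)"
    and nonint: "of_int c * u + - z \<notin> \<int>"
  shows "(\<Sum>w\<in>{w. u < w \<and> w < u + 1 \<and> of_int c * w + - z \<in> \<int>}.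
      eulerfun P (of_int a * w + x) * bernfun q (of_int b * w + y) *
      (if of_int c * w + - z \<in> \<int> then 2 * (-1) powi \<lfloor>of_int c * w + - z\<rfloor> else 0))
    = 2 * S35 (Suc P) q a b c x y z"
proof -
  define n0 where "n0 = \<lfloor>of_int c * u + - z\<rfloor>"
  have cr: "(of_int c :: real) \<noteq> 0" using c by simp
  have set: "{w. u < w \<and> w < u + 1 \<and> of_int c * w + - z \<in> \<int>}
       = (\<lambda>k. (of_int k - - z) / of_int c) ` {n0 + 1..<n0 + 1 + c}"
    unfolding n0_def by (rule lin_pts_window[OF c nonint])
  have inj: "inj_on (\<lambda>k::int. (of_int k - - z) / of_int c) {n0 + 1..<n0 + 1 + c}"
    by (rule inj_onI) (use cr in \<open>simp add: field_simps\<close>)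
  define \<phi> where "\<phi> = (\<lambda>k::int. (-1) powi k * eulerfun P (of_int a * ((of_int k + z) / of_int c) + x)
      * bernfun q (of_int b * ((of_int k + z) / of_int c) + y))"
  have tm: "eulerfun P (of_int a * w + x) * bernfun q (of_int b * w + y) *
      (if of_int c * w + - z \<in> \<int> then 2 * (-1) powi \<lfloor>of_int c * w + - z\<rfloor> else 0) = 2 * \<phi> k"
    if w: "w = (of_int k - - z) / of_int c" for w k
  proof -
    have e: "of_int c * w + - z = of_int k" using w cr by (simp add: field_simps)
    have e2: "w = (of_int k + z) / of_int c" using w by simp
    show ?thesis unfolding e e2 \<phi>_def using cr by simp
  qed
  have per: "\<phi> (k + c) = \<phi> k" for k
  proof -
    have e1: "of_int a * ((of_int (k + c) + z) / of_int c) + x = (of_int a * ((of_int k + z) / of_int c) + x) + of_int a"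
      using cr by (simp add: field_simps)
    have e2: "of_int b * ((of_int (k + c) + z) / of_int c) + y = (of_int b * ((of_int k + z) / of_int c) + y) + of_int b"
      using cr by (simp add: field_simps)
    have s: "(-1::real) powi (k + c) = (-1) powi k * (-1) powi c" by (simp add: m1powi)
    show ?thesis unfolding \<phi>_def e1 e2 eulerfun_shift bernfun_shift s
      using sign_cancel(1)[OF ac] by (simp add: algebra_simps)
  qed
  have "(\<Sum>w\<in>{w. u < w \<and> w < u + 1 \<and> of_int c * w + - z \<in> \<int>}.
      eulerfun P (of_int a * w + x) * bernfun q (of_int b * w + y) *
      (if of_int c * w + - z \<in> \<int> then 2 * (-1) powi \<lfloor>of_int c * w + - z\<rfloor> else 0))
      = (\<Sum>k\<in>{n0 + 1..<n0 + 1 + c}. 2 * \<phi> k)"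
    unfolding set sum.reindex[OF inj] comp_def by (rule sum.cong[OF refl]) (rule tm, rule refl)
  also have "\<dots> = 2 * (\<Sum>k\<in>{0..<c}. \<phi> k)"
    by (simp add: sum_distrib_left[symmetric] window_sum[where g=\<phi> and m=c, OF c per])
  also have "(\<Sum>k\<in>{0..<c}. \<phi> k) = (\<Sum>\<mu>\<in>{0..<nat c}. \<phi> (int \<mu>))"
    by (rule nat_int_sum[symmetric])
  also have "\<dots> = S35 (Suc P) q a b c x y z"
    unfolding S35_def \<phi>_def by (intro sum.cong refl) simp
  finally show ?thesis .
qed



lemma sumB:
  fixes a b c :: int and x y z u r s :: real
  assumes a: "a > 0" and b: "b > 0" and c: "c > 0" and ac: "even (a + c)" and q: "q \<ge> 1"
    and nonint: "of_int b * u + y \<notin> \<int>"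
  shows "(\<Sum>w\<in>{w. u < w \<and> w < u + 1 \<and> of_int b * w + y \<in> \<int>}.
      (if of_int b * w + y \<in> \<int> then -1 else 0) *
      (\<Sum>i\<le>P. real (P choose i) * real q * r ^ (P - i) * s ^ (q - 1) *
          (eulerfun i (of_int a * w + x) * EL (P + q - i - 1) (of_int c * w + - z))))
    = - (\<Sum>i\<le>P. real (P choose i) * real q * r ^ (P - i) * s ^ (q - 1) * (-1) ^ (P + q - i)
          * S4 (P + q - i) (i + 1) c (- a) b z x y)"
proof -
  define n0 where "n0 = \<lfloor>of_int b * u + y\<rfloor>"
  have br: "(of_int b :: real) \<noteq> 0" using b by simp
  have set: "{w. u < w \<and> w < u + 1 \<and> of_int b * w + y \<in> \<int>}
       = (\<lambda>k. (of_int k - y) / of_int b) ` {n0 + 1..<n0 + 1 + b}"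
    unfolding n0_def by (rule lin_pts_window[OF b nonint])
  have inj: "inj_on (\<lambda>k::int. (of_int k - y) / of_int b) {n0 + 1..<n0 + 1 + b}"
    by (rule inj_onI) (use br in \<open>simp add: field_simps\<close>)
  define \<psi> where "\<psi> = (\<lambda>i (l::int). eulerfun (P + q - i - 1) (of_int c * ((of_int l + y) / of_int b) + z)
      * eulerfun i (of_int (- a) * ((of_int l + y) / of_int b) + x))"
  define coef where "coef = (\<lambda>i. real (P choose i) * real q * r ^ (P - i) * s ^ (q - 1) * (-1) ^ (P + q - i))"
  have tm: "(if of_int b * w + y \<in> \<int> then -1 else 0) *
      (\<Sum>i\<le>P. real (P choose i) * real q * r ^ (P - i) * s ^ (q - 1) *
          (eulerfun i (of_int a * w + x) * EL (P + q - i - 1) (of_int c * w + - z)))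
      = - (\<Sum>i\<le>P. coef i * \<psi> i (- k))"
    if w: "w = (of_int k - y) / of_int b" for w k
  proof -
    have e: "of_int b * w + y = of_int k" unfolding w using br by (simp add: field_simps)
    have t: "eulerfun i (of_int a * w + x) * EL (P + q - i - 1) (of_int c * w + - z)
        = (-1) ^ (P + q - i) * \<psi> i (- k)" if "i \<le> P" for i
    proof -
      have n: "P + q - i - 1 + 1 = P + q - i" using q that by simp
      have e1: "- (of_int c * w + - z) = of_int c * ((of_int (- k) + y) / of_int b) + z"
        unfolding w using br by (simp add: field_simps)
      have e2: "of_int a * w + x = of_int (- a) * ((of_int (- k) + y) / of_int b) + x"
        unfolding w using br by (simp add: field_simps)
      show ?thesis unfolding EL_via_neg n e1 e2 \<psi>_def by (simp add: algebra_simps)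
    qed
    have "(\<Sum>i\<le>P. real (P choose i) * real q * r ^ (P - i) * s ^ (q - 1) *
          (eulerfun i (of_int a * w + x) * EL (P + q - i - 1) (of_int c * w + - z)))
        = (\<Sum>i\<le>P. coef i * \<psi> i (- k))"
      apply (rule sum.cong[OF refl])
      subgoal for i by (subst t) (auto simp: coef_def)
      done
    then show ?thesis unfolding e by simp
  qed
  have per: "\<psi> i (l + b) = \<psi> i l" for i l
  proof -
    have e1: "of_int c * ((of_int (l + b) + y) / of_int b) + z = (of_int c * ((of_int l + y) / of_int b) + z) + of_int c"
      using br by (simp add: field_simps)
    have e2: "of_int (- a) * ((of_int (l + b) + y) / of_int b) + x = (of_int (- a) * ((of_int l + y) / of_int b) + x) + of_int (- a)"
      using br by (simp add: field_simps)
    show ?thesis unfolding \<psi>_def e1 e2 eulerfun_shift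
      using sign_cancel(2)[OF ac] by (simp add: algebra_simps)
  qed
  have per2: "\<psi> i (- (l + b)) = \<psi> i (- l)" for i l
    using per[of i "- (l + b)"] by simp
  have inner: "(\<Sum>k\<in>{n0 + 1..<n0 + 1 + b}. \<psi> i (- k)) = S4 (P + q - i) (i + 1) c (- a) b z x y" for i
  proof -
    have "(\<Sum>k\<in>{n0 + 1..<n0 + 1 + b}. \<psi> i (- k)) = (\<Sum>k\<in>{0..<b}. \<psi> i (- k))"
      by (rule window_sum[where g="\<lambda>k. \<psi> i (- k)" and m=b, OF b per2])
    also have "\<dots> = (\<Sum>k\<in>{0..<b}. \<psi> i k)"
      by (rule window_neg[where g="\<psi> i" and m=b, OF b per])
    also have "\<dots> = (\<Sum>\<mu>\<in>{0..<nat b}. \<psi> i (int \<mu>))"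
      by (rule nat_int_sum[symmetric])
    also have "\<dots> = S4 (P + q - i) (i + 1) c (- a) b z x y"
      unfolding S4_def \<psi>_def by (intro sum.cong refl) simp
    finally show ?thesis .
  qed
  have "(\<Sum>w\<in>{w. u < w \<and> w < u + 1 \<and> of_int b * w + y \<in> \<int>}.
      (if of_int b * w + y \<in> \<int> then -1 else 0) *
      (\<Sum>i\<le>P. real (P choose i) * real q * r ^ (P - i) * s ^ (q - 1) *
          (eulerfun i (of_int a * w + x) * EL (P + q - i - 1) (of_int c * w + - z))))
      = (\<Sum>k\<in>{n0 + 1..<n0 + 1 + b}. - (\<Sum>i\<le>P. coef i * \<psi> i (- k)))"
    unfolding set sum.reindex[OF inj] comp_def by (rule sum.cong[OF refl]) (rule tm, rule refl)
  also have "\<dots> = - (\<Sum>i\<le>P. coef i * (\<Sum>k\<in>{n0 + 1..<n0 + 1 + b}. \<psi> i (- k)))"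
    by (simp add: sum_negf sum_distrib_left sum.swap[where A="{n0 + 1..<n0 + 1 + b}"])
  also have "\<dots> = - (\<Sum>i\<le>P. coef i * S4 (P + q - i) (i + 1) c (- a) b z x y)"
    by (simp add: inner)
  finally show ?thesis unfolding coef_def .
qed

lemma sumA:
  fixes a b c :: int and x y z u r s :: real
  assumes a: "a > 0" and b: "b > 0" and c: "c > 0" and ac: "even (a + c)"
    and nonint: "of_int a * u + x \<notin> \<int>"
  shows "(\<Sum>w\<in>{w. u < w \<and> w < u + 1 \<and> of_int a * w + x \<in> \<int>}.
      (if of_int a * w + x \<in> \<int> then 2 * (-1) powi \<lfloor>of_int a * w + x\<rfloor> else 0) *
      (\<Sum>j\<le>q. real (q choose j) * r ^ P * s ^ (q - j) *
          (BL j (of_int b * w + y) * EL (P + q - j) (of_int c * w + - z))))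
    = 2 * (\<Sum>j\<le>q. real (q choose j) * r ^ P * s ^ (q - j) * (-1) ^ j * (-1) ^ (P + q - j + 1)
          * S35 (P + q - j + 1) j c b a z (- y) x)"
proof -
  define n0 where "n0 = \<lfloor>of_int a * u + x\<rfloor>"
  have ar: "(of_int a :: real) \<noteq> 0" using a by simp
  have set: "{w. u < w \<and> w < u + 1 \<and> of_int a * w + x \<in> \<int>}
       = (\<lambda>k. (of_int k - x) / of_int a) ` {n0 + 1..<n0 + 1 + a}"
    unfolding n0_def by (rule lin_pts_window[OF a nonint])
  have inj: "inj_on (\<lambda>k::int. (of_int k - x) / of_int a) {n0 + 1..<n0 + 1 + a}"
    by (rule inj_onI) (use ar in \<open>simp add: field_simps\<close>)
  define \<chi> where "\<chi> = (\<lambda>j (l::int). (-1) powi l * eulerfun (P + q - j) (of_int c * ((of_int l + x) / of_int a) + z)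
      * bernfun j (of_int b * ((of_int l + x) / of_int a) + - y))"
  define coef where "coef = (\<lambda>j. real (q choose j) * r ^ P * s ^ (q - j) * (-1) ^ j * (-1) ^ (P + q - j + 1))"
  have tm: "(if of_int a * w + x \<in> \<int> then 2 * (-1) powi \<lfloor>of_int a * w + x\<rfloor> else 0) *
      (\<Sum>j\<le>q. real (q choose j) * r ^ P * s ^ (q - j) *
          (BL j (of_int b * w + y) * EL (P + q - j) (of_int c * w + - z)))
      = 2 * (\<Sum>j\<le>q. coef j * \<chi> j (- k))"
    if w: "w = (of_int k - x) / of_int a" for w k
  proof -
    have e: "of_int a * w + x = of_int k" unfolding w using ar by (simp add: field_simps)
    have e1: "- (of_int c * w + - z) = of_int c * ((of_int (- k) + x) / of_int a) + z"
      unfolding w using ar by (simp add: field_simps)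
    have e2: "- (of_int b * w + y) = of_int b * ((of_int (- k) + x) / of_int a) + - y"
      unfolding w using ar by (simp add: field_simps)
    have sg: "(-1::real) powi k = (-1) powi (- k)" by (simp add: m1powi)
    have "(-1) powi k * (\<Sum>j\<le>q. real (q choose j) * r ^ P * s ^ (q - j) *
          (BL j (of_int b * w + y) * EL (P + q - j) (of_int c * w + - z)))
        = (\<Sum>j\<le>q. coef j * \<chi> j (- k))"
      unfolding sum_distrib_left coef_def \<chi>_def
      by (intro sum.cong refl) (simp only: BL_via_neg EL_via_neg e1 e2 sg, simp add: algebra_simps)
    then show ?thesis unfolding e by simp
  qed
  have per: "\<chi> j (l + a) = \<chi> j l" for j l
  proof -
    have e1: "of_int c * ((of_int (l + a) + x) / of_int a) + z = (of_int c * ((of_int l + x) / of_int a) + z) + of_int c"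
      using ar by (simp add: field_simps)
    have e2: "of_int b * ((of_int (l + a) + x) / of_int a) + - y = (of_int b * ((of_int l + x) / of_int a) + - y) + of_int b"
      using ar by (simp add: field_simps)
    have s: "(-1::real) powi (l + a) = (-1) powi l * (-1) powi a" by (simp add: m1powi)
    show ?thesis unfolding \<chi>_def e1 e2 eulerfun_shift bernfun_shift s
      using sign_cancel(1)[OF ac] by (simp add: algebra_simps)
  qed
  have per2: "\<chi> j (- (l + a)) = \<chi> j (- l)" for j l
    using per[of j "- (l + a)"] by simp
  have inner: "(\<Sum>k\<in>{n0 + 1..<n0 + 1 + a}. \<chi> j (- k)) = S35 (P + q - j + 1) j c b a z (- y) x" for j
  proof -
    have "(\<Sum>k\<in>{n0 + 1..<n0 + 1 + a}. \<chi> j (- k)) = (\<Sum>k\<in>{0..<a}. \<chi> j (- k))"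
      by (rule window_sum[where g="\<lambda>k. \<chi> j (- k)" and m=a, OF a per2])
    also have "\<dots> = (\<Sum>k\<in>{0..<a}. \<chi> j k)"
      by (rule window_neg[where g="\<chi> j" and m=a, OF a per])
    also have "\<dots> = (\<Sum>\<mu>\<in>{0..<nat a}. \<chi> j (int \<mu>))"
      by (rule nat_int_sum[symmetric])
    also have "\<dots> = S35 (P + q - j + 1) j c b a z (- y) x"
      unfolding S35_def \<chi>_def by (intro sum.cong refl) simp
    finally show ?thesis .
  qed
  have "(\<Sum>w\<in>{w. u < w \<and> w < u + 1 \<and> of_int a * w + x \<in> \<int>}.
      (if of_int a * w + x \<in> \<int> then 2 * (-1) powi \<lfloor>of_int a * w + x\<rfloor> else 0) *
      (\<Sum>j\<le>q. real (q choose j) * r ^ P * s ^ (q - j) *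
          (BL j (of_int b * w + y) * EL (P + q - j) (of_int c * w + - z))))
      = (\<Sum>k\<in>{n0 + 1..<n0 + 1 + a}. 2 * (\<Sum>j\<le>q. coef j * \<chi> j (- k)))"
    unfolding set sum.reindex[OF inj] comp_def by (rule sum.cong[OF refl]) (rule tm, rule refl)
  also have "\<dots> = 2 * (\<Sum>j\<le>q. coef j * (\<Sum>k\<in>{n0 + 1..<n0 + 1 + a}. \<chi> j (- k)))"
    by (simp add: sum_distrib_left sum.swap[where A="{n0 + 1..<n0 + 1 + a}"])
  also have "\<dots> = 2 * (\<Sum>j\<le>q. coef j * S35 (P + q - j + 1) j c b a z (- y) x)"
    by (simp add: inner)
  finally show ?thesis unfolding coef_def .
qed



lemma Phi3_scale: "Phi3 P Q r s (\<lambda>i. k1 * fa i) fb (\<lambda>l. k2 * fc l) = k1 * k2 * Phi3 P Q r s fa fb fc"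
  unfolding Phi3_def by (simp add: sum_distrib_left algebra_simps)

lemma main_id:
  fixes a b c :: int and P q :: nat and x y z :: real
  assumes a: "a > 0" and b: "b > 0" and c: "c > 0" and ac: "even (a + c)" and q: "q \<ge> 1"
  shows "2 * S35 (Suc P) q a b c x y z
     - (\<Sum>i\<le>P. real (P choose i) * real q * (- of_int a / of_int c) ^ (P - i) * (- of_int b / of_int c) ^ (q - 1)
          * (-1) ^ (P + q - i) * S4 (P + q - i) (i + 1) c (- a) b z x y)
     + 2 * (\<Sum>j\<le>q. real (q choose j) * (- of_int a / of_int c) ^ P * (- of_int b / of_int c) ^ (q - j)
          * (-1) ^ j * (-1) ^ (P + q - j + 1) * S35 (P + q - j + 1) j c b a z (- y) x) = 0"
proof -
  define r where "r = - of_int a / (of_int c :: real)"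
  define s where "s = - of_int b / (of_int c :: real)"
  define A where "A = (\<lambda>w. of_int a * w + x)"
  define B where "B = (\<lambda>w. of_int b * w + y)"
  define C where "C = (\<lambda>w. of_int c * w + - z)"
  define f where "f = (\<lambda>w. Phi3 P q r s (\<lambda>i. eulerfun i (A w)) (\<lambda>j. bernfun j (B w)) (\<lambda>l. eulerfun l (C w)))"
  define g where "g = (\<lambda>w. Phi3 P q r s (\<lambda>i. EL i (A w)) (\<lambda>j. BL j (B w)) (\<lambda>l. EL l (C w)))"
  have ar: "(of_int a :: real) > 0" and br: "(of_int b :: real) > 0" and cr: "(of_int c :: real) > 0"
    using a b c by simp_all
  define bad where "bad = {w. 0 < w \<and> w < 1 \<and> A w \<in> \<int>} \<union> {w. 0 < w \<and> w < 1 \<and> B w \<in> \<int>}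
      \<union> {w. 0 < w \<and> w < 1 \<and> C w \<in> \<int>}"
  have fbad: "finite bad" unfolding bad_def A_def B_def C_def
    using lin_pts_finite[OF ar] lin_pts_finite[OF br] lin_pts_finite[OF cr] by blast
  have "infinite ({0<..<(1::real)} - bad)"
    using Diff_infinite_finite[OF fbad] infinite_Ioo[of 0 "1::real"] by simp
  then obtain u where "u \<in> {0<..<(1::real)} - bad" using infinite_imp_nonempty by blast
  then have u: "0 < u" "u < 1" "u \<notin> bad" by auto
  have nA: "A u \<notin> \<int>" and nB: "B u \<notin> \<int>" and nC: "C u \<notin> \<int>" using u unfolding bad_def by auto
  define KA where "KA = {w. u < w \<and> w < u + 1 \<and> A w \<in> \<int>}"
  define KB where "KB = {w. u < w \<and> w < u + 1 \<and> B w \<in> \<int>}"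
  define KC where "KC = {w. u < w \<and> w < u + 1 \<and> C w \<in> \<int>}"
  define K where "K = KA \<union> KB \<union> KC"
  have finK: "finite K" unfolding K_def KA_def KB_def KC_def A_def B_def C_def
    using lin_pts_finite[OF ar] lin_pts_finite[OF br] lin_pts_finite[OF cr] by blast
  have KI: "K \<inter> {u<..<u + 1} = K" unfolding K_def KA_def KB_def KC_def by auto
  have H: "\<forall>s' t. u \<le> s' \<longrightarrow> s' < t \<longrightarrow> t \<le> u + 1 \<longrightarrow> {s'<..<t} \<inter> K = {} \<longrightarrow> f s' = g t"
  proof (intro allI impI)
    fix s' t assume h: "u \<le> s'" "s' < t" "t \<le> u + 1" "{s'<..<t} \<inter> K = {}"
    have inside: "w \<notin> K" if "s' < w" "w < t" for w using h that by auto
    have nA': "\<forall>w. s' < w \<and> w < t \<longrightarrow> of_int a * w + x \<notin> \<int>"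
      using inside h unfolding K_def KA_def A_def by auto
    have nB': "\<forall>w. s' < w \<and> w < t \<longrightarrow> of_int b * w + y \<notin> \<int>"
      using inside h unfolding K_def KB_def B_def by auto
    have nC': "\<forall>w. s' < w \<and> w < t \<longrightarrow> of_int c * w + - z \<notin> \<int>"
      using inside h unfolding K_def KC_def C_def by auto
    show "f s' = g t" unfolding f_def g_def A_def B_def C_def r_def s_def
      by (rule between_eq[OF a b c h(2) nA' nB' nC'])
  qed
  have tel: "(\<Sum>w\<in>K. f w - g w) = g (u + 1) - f u"
    using telescope[OF finK, of u "u + 1" f g] H KI by simp
  have shA: "A (u + 1) = A u + of_int a" and shB: "B (u + 1) = B u + of_int b" and shC: "C (u + 1) = C u + of_int c"
    unfolding A_def B_def C_def by (simp_all add: algebra_simps)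
  have nA1: "A (u + 1) \<notin> \<int>" unfolding shA using nA
    by (metis Ints_diff Ints_of_int add_diff_cancel_right')
  have nB1: "B (u + 1) \<notin> \<int>" unfolding shB using nB
    by (metis Ints_diff Ints_of_int add_diff_cancel_right')
  have nC1: "C (u + 1) \<notin> \<int>" unfolding shC using nC
    by (metis Ints_diff Ints_of_int add_diff_cancel_right')
  have gf: "g (u + 1) = f (u + 1)" unfolding g_def f_def
    using nA1 nB1 nC1 by (simp add: EL_nonint BL_nonint)
  have fper: "f (u + 1) = f u"
  proof -
    have "f (u + 1) = Phi3 P q r s (\<lambda>i. (-1) powi a * eulerfun i (A u)) (\<lambda>j. bernfun j (B u)) (\<lambda>l. (-1) powi c * eulerfun l (C u))"
      unfolding f_def shA shB shC eulerfun_shift bernfun_shift ..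
    also have "\<dots> = f u" unfolding Phi3_scale f_def using sign_cancel(1)[OF ac] by simp
    finally show ?thesis .
  qed
  have tot: "(\<Sum>w\<in>K. f w - g w) = 0" using tel gf fper by simp
  define brC where "brC = (\<lambda>w. eulerfun P (A w) * bernfun q (B w) *
      (if C w \<in> \<int> then 2 * (-1) powi \<lfloor>C w\<rfloor> else 0))"
  define brB where "brB = (\<lambda>w. (if B w \<in> \<int> then -1 else 0) *
      (\<Sum>i\<le>P. real (P choose i) * real q * r ^ (P - i) * s ^ (q - 1) *
          (eulerfun i (A w) * EL (P + q - i - 1) (C w))))"
  define brA where "brA = (\<lambda>w. (if A w \<in> \<int> then 2 * (-1) powi \<lfloor>A w\<rfloor> else 0) *
      (\<Sum>j\<le>q. real (q choose j) * r ^ P * s ^ (q - j) *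
          (BL j (B w) * EL (P + q - j) (C w))))"
  have jump: "f w - g w = brC w + brB w + brA w" for w
  proof -
    define X2 where "X2 = Phi3 P q r s (\<lambda>i. eulerfun i (A w)) (\<lambda>j. bernfun j (B w)) (\<lambda>l. EL l (C w))"
    define X3 where "X3 = Phi3 P q r s (\<lambda>i. eulerfun i (A w)) (\<lambda>j. BL j (B w)) (\<lambda>l. EL l (C w))"
    have j1: "(\<lambda>l. eulerfun l (C w) - EL l (C w)) = (\<lambda>l. if l = 0 then (if C w \<in> \<int> then 2 * (-1) powi \<lfloor>C w\<rfloor> else 0) else 0)"
      by (rule ext) (simp add: eulerfun_jump)
    have j2: "(\<lambda>j. bernfun j (B w) - BL j (B w)) = (\<lambda>j. if j = 1 then (if B w \<in> \<int> then -1 else 0) else 0)"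
      by (rule ext) (simp add: bernfun_jump)
    have j3: "(\<lambda>i. eulerfun i (A w) - EL i (A w)) = (\<lambda>i. if i = 0 then (if A w \<in> \<int> then 2 * (-1) powi \<lfloor>A w\<rfloor> else 0) else 0)"
      by (rule ext) (simp add: eulerfun_jump)
    have d1: "f w - X2 = brC w" unfolding f_def X2_def Phi3_diff_c j1 Phi3_delta_c brC_def ..
    have d2: "X2 - X3 = brB w" unfolding X2_def X3_def Phi3_diff_b j2 Phi3_delta_b[OF q] brB_def ..
    have d3: "X3 - g w = brA w" unfolding X3_def g_def Phi3_diff_a j3 Phi3_delta_a brA_def ..
    show ?thesis using d1 d2 d3 by simp
  qed
  have split: "(\<Sum>w\<in>K. f w - g w) = (\<Sum>w\<in>K. brC w) + (\<Sum>w\<in>K. brB w) + (\<Sum>w\<in>K. brA w)"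
    unfolding jump by (simp add: sum.distrib)
  have sC: "(\<Sum>w\<in>K. brC w) = (\<Sum>w\<in>KC. brC w)"
    by (rule sum.mono_neutral_right[OF finK]) (auto simp: K_def KA_def KB_def KC_def brC_def)
  have sB: "(\<Sum>w\<in>K. brB w) = (\<Sum>w\<in>KB. brB w)"
    by (rule sum.mono_neutral_right[OF finK]) (auto simp: K_def KA_def KB_def KC_def brB_def)
  have sA: "(\<Sum>w\<in>K. brA w) = (\<Sum>w\<in>KA. brA w)"
    by (rule sum.mono_neutral_right[OF finK]) (auto simp: K_def KA_def KB_def KC_def brA_def)
  have vC: "(\<Sum>w\<in>KC. brC w) = 2 * S35 (Suc P) q a b c x y z"
    unfolding KC_def brC_def A_def B_def C_def
    by (rule sumC[OF a b c ac]) (use nC in \<open>simp add: C_def\<close>)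
  have vB: "(\<Sum>w\<in>KB. brB w) = - (\<Sum>i\<le>P. real (P choose i) * real q * r ^ (P - i) * s ^ (q - 1) * (-1) ^ (P + q - i)
          * S4 (P + q - i) (i + 1) c (- a) b z x y)"
    unfolding KB_def brB_def A_def B_def C_def
    by (rule sumB[OF a b c ac q]) (use nB in \<open>simp add: B_def\<close>)
  have vA: "(\<Sum>w\<in>KA. brA w) = 2 * (\<Sum>j\<le>q. real (q choose j) * r ^ P * s ^ (q - j) * (-1) ^ j * (-1) ^ (P + q - j + 1)
          * S35 (P + q - j + 1) j c b a z (- y) x)"
    unfolding KA_def brA_def A_def B_def C_def
    by (rule sumA[OF a b c ac]) (use nA in \<open>simp add: A_def\<close>)
  show ?thesis using tot split sC sB sA vC vB vA unfolding r_def s_def by simp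
qed



lemma powi_nat_diff: "(x::real) \<noteq> 0 \<Longrightarrow> x powi (int m - int n) = x ^ m / x ^ n"
  by (simp add: power_int_diff)

lemma m1_sq: "((-1::real) ^ n) * (-1) ^ n = 1"
  by (induct n) auto

lemma termT:
  fixes A Bv Cv X :: real
  assumes A: "A \<noteq> 0" and B: "Bv \<noteq> 0" and C: "Cv \<noteq> 0" and i: "i \<le> P" and q: "q \<ge> 1"
  shows "(1 / A ^ P) * (Bv / Bv ^ q) * (1 / 2) * (real (P choose i) * real q * (- A / Cv) ^ (P - i) * (- Bv / Cv) ^ (q - 1)
      * (-1) ^ (P + q - i) * X)
    = - (real q / 2) * (real (P choose i) * (A / A ^ Suc i) * (Cv ^ Suc (Suc i) / Cv ^ (Suc P + q)) * X)"
proof -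
  obtain d where d: "P = i + d" using i le_Suc_ex by blast
  obtain q' where q': "q = Suc q'" using q by (cases q) auto
  have e1: "P - i = d" "q - 1 = q'" "P + q - i = Suc (d + q')" "Suc P + q = Suc (Suc (i + d + q'))" using d q' by simp_all
  have p1: "(- A / Cv) ^ d = (-1) ^ d * (A ^ d / Cv ^ d)"
  proof -
    have "- A / Cv = (-1) * (A / Cv)" by simp
    then show ?thesis by (simp only: power_mult_distrib power_divide)
  qed
  have p2: "(- Bv / Cv) ^ q' = (-1) ^ q' * (Bv ^ q' / Cv ^ q')"
  proof -
    have "- Bv / Cv = (-1) * (Bv / Cv)" by simp
    then show ?thesis by (simp only: power_mult_distrib power_divide)
  qed
  have sg: "(-1::real) ^ d * (-1) ^ q' * (-1) ^ Suc (d + q') = -1"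
  proof -
    have "(-1::real) ^ Suc (d + q') = - ((-1) ^ d * (-1) ^ q')" by (simp add: power_add)
    then show ?thesis using m1_sq[of d] m1_sq[of q'] by (simp add: algebra_simps)
  qed
  have fa: "(1 / A ^ (i + d)) * A ^ d = A / A ^ Suc i" using A by (simp add: power_add field_simps)
  have fb: "(Bv / Bv ^ Suc q') * Bv ^ q' = 1" using B by (simp add: field_simps)
  have fc: "1 / (Cv ^ d * Cv ^ q') = Cv ^ Suc (Suc i) / Cv ^ Suc (Suc (i + d + q'))"
    using C by (simp add: power_add field_simps)
  have "(1 / A ^ P) * (Bv / Bv ^ q) * (1 / 2) * (real (P choose i) * real q * (- A / Cv) ^ (P - i) * (- Bv / Cv) ^ (q - 1)
      * (-1) ^ (P + q - i) * X)
      = (real (P choose i) * real q * X / 2) * ((-1) ^ d * (-1) ^ q' * (-1) ^ Suc (d + q'))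
        * ((1 / A ^ (i + d)) * A ^ d) * ((Bv / Bv ^ Suc q') * Bv ^ q') * (1 / (Cv ^ d * Cv ^ q'))"
    unfolding e1 p1 p2 unfolding d q'
    by (simp only: divide_inverse inverse_mult_distrib mult_ac mult_1_left mult_1_right)
  also have "\<dots> = - (real q / 2) * (real (P choose i) * (A / A ^ Suc i) * (Cv ^ Suc (Suc i) / Cv ^ Suc (Suc (i + d + q'))) * X)"
    unfolding sg fa fb fc by simp
  finally show ?thesis unfolding e1 .
qed



lemma termU:
  fixes A Bv Cv X :: real
  assumes A: "A \<noteq> 0" and B: "Bv \<noteq> 0" and C: "Cv \<noteq> 0" and j: "j \<le> q"
  shows "(1 / A ^ P) * (Bv / Bv ^ q) * (real (q choose j) * (- A / Cv) ^ P * (- Bv / Cv) ^ (q - j)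
      * (-1) ^ j * (-1) ^ (P + q - j + 1) * X)
    = - (real (q choose j) * (-1) ^ j * (Bv / Bv ^ j) * (Cv ^ Suc j / Cv ^ (Suc P + q)) * X)"
proof -
  obtain e where e: "q = j + e" using j le_Suc_ex by blast
  have e1: "q - j = e" "P + q - j + 1 = Suc (P + e)" "Suc P + q = Suc (P + (j + e))" using e by simp_all
  have p1: "(- A / Cv) ^ P = (-1) ^ P * (A ^ P / Cv ^ P)"
  proof -
    have "- A / Cv = (-1) * (A / Cv)" by simp
    then show ?thesis by (simp only: power_mult_distrib power_divide)
  qed
  have p2: "(- Bv / Cv) ^ e = (-1) ^ e * (Bv ^ e / Cv ^ e)"
  proof -
    have "- Bv / Cv = (-1) * (Bv / Cv)" by simp
    then show ?thesis by (simp only: power_mult_distrib power_divide)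
  qed
  have sg: "(-1::real) ^ P * (-1) ^ e * (-1) ^ j * (-1) ^ Suc (P + e) = - ((-1) ^ j)"
  proof -
    have "(-1::real) ^ Suc (P + e) = - ((-1) ^ P * (-1) ^ e)" by (simp add: power_add)
    then show ?thesis using m1_sq[of P] m1_sq[of e] by (simp add: algebra_simps)
  qed
  have fa: "(1 / A ^ P) * A ^ P = 1" using A by simp
  have fb: "(Bv / Bv ^ (j + e)) * Bv ^ e = Bv / Bv ^ j" using B by (simp add: power_add field_simps)
  have fc: "1 / (Cv ^ P * Cv ^ e) = Cv ^ Suc j / Cv ^ Suc (P + (j + e))"
    using C by (simp add: power_add field_simps)
  have "(1 / A ^ P) * (Bv / Bv ^ q) * (real (q choose j) * (- A / Cv) ^ P * (- Bv / Cv) ^ (q - j)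
      * (-1) ^ j * (-1) ^ (P + q - j + 1) * X)
      = (real (q choose j) * X) * ((-1) ^ P * (-1) ^ e * (-1) ^ j * (-1) ^ Suc (P + e))
        * ((1 / A ^ P) * A ^ P) * ((Bv / Bv ^ (j + e)) * Bv ^ e) * (1 / (Cv ^ P * Cv ^ e))"
    unfolding e1 p1 p2 unfolding e
    by (simp only: divide_inverse inverse_mult_distrib mult_ac mult_1_left mult_1_right)
  also have "\<dots> = - (real (q choose j) * (-1) ^ j * (Bv / Bv ^ j) * (Cv ^ Suc j / Cv ^ Suc (P + (j + e))) * X)"
    unfolding sg fa fb fc by simp
  finally show ?thesis unfolding e1 unfolding e .
qed

theorem theorem5:
  fixes a b c :: int and p q :: nat and x y z :: real
  assumes "a > 0" "b > 0" "c > 0"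
    and "coprime a b" "coprime b c" "coprime a c"
    and "even (a + c)"
    and "p \<ge> 1" "q \<ge> 1"
  shows "real_of_int a powi (1 - int p) * real_of_int b powi (1 - int q) * S35 p q a b c x y z
    = - (real q / 2) * (\<Sum>j=1..p. real ((p - 1) choose (j - 1))
          * real_of_int a powi (1 - int j) * real_of_int c powi (1 + int j - int p - int q)
          * S4 (p + q - j) j c (-a) b z x y)
      + (\<Sum>h=0..q. real (q choose h) * (-1) ^ h
          * real_of_int b powi (1 - int h) * real_of_int c powi (1 + int h - int p - int q)
          * S35 (p + q - h) h c b a z (-y) x)"
proof -
  obtain P where p: "p = Suc P" using \<open>p \<ge> 1\<close> by (cases p) auto
  define Ar where "Ar = real_of_int a"
  define Bv where "Bv = real_of_int b"
  define Cv where "Cv = real_of_int c"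
  have A0: "Ar \<noteq> 0" and B0: "Bv \<noteq> 0" and C0: "Cv \<noteq> 0" using assms(1-3) by (simp_all add: Ar_def Bv_def Cv_def)
  define S where "S = S35 (Suc P) q a b c x y z"
  define T where "T = (\<lambda>i. real (P choose i) * real q * (- Ar / Cv) ^ (P - i) * (- Bv / Cv) ^ (q - 1)
          * (-1) ^ (P + q - i) * S4 (P + q - i) (i + 1) c (- a) b z x y)"
  define U where "U = (\<lambda>j. real (q choose j) * (- Ar / Cv) ^ P * (- Bv / Cv) ^ (q - j)
          * (-1) ^ j * (-1) ^ (P + q - j + 1) * S35 (P + q - j + 1) j c b a z (- y) x)"
  have M: "2 * S - (\<Sum>i\<le>P. T i) + 2 * (\<Sum>j\<le>q. U j) = 0"
    unfolding S_def T_def U_def Ar_def Bv_def Cv_def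
    by (rule main_id[OF assms(1-3) assms(7) assms(9)])
  have Seq: "S = (1 / 2) * (\<Sum>i\<le>P. T i) - (\<Sum>j\<le>q. U j)" using M by simp
  have e1: "real_of_int a powi (1 - int p) = 1 / Ar ^ P"
  proof -
    have "1 - int p = int 0 - int P" using p by simp
    then show ?thesis unfolding Ar_def[symmetric] using A0 by (simp add: power_int_minus inverse_eq_divide)
  qed
  have e2: "real_of_int b powi (1 - int q) = Bv / Bv ^ q"
  proof -
    have "1 - int q = int 1 - int q" by simp
    then show ?thesis unfolding Bv_def[symmetric] by (simp only: powi_nat_diff[OF B0] power_one_right)
  qed
  have R1: "(\<Sum>j=1..p. real ((p - 1) choose (j - 1))
          * real_of_int a powi (1 - int j) * real_of_int c powi (1 + int j - int p - int q)
          * S4 (p + q - j) j c (-a) b z x y)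
      = (\<Sum>i\<le>P. real (P choose i) * (Ar / Ar ^ Suc i) * (Cv ^ Suc (Suc i) / Cv ^ (Suc P + q))
          * S4 (P + q - i) (i + 1) c (- a) b z x y)"
  proof -
    have "(\<Sum>j=1..p. real ((p - 1) choose (j - 1))
          * real_of_int a powi (1 - int j) * real_of_int c powi (1 + int j - int p - int q)
          * S4 (p + q - j) j c (-a) b z x y)
        = (\<Sum>i=0..P. real ((p - 1) choose (Suc i - 1))
          * real_of_int a powi (1 - int (Suc i)) * real_of_int c powi (1 + int (Suc i) - int p - int q)
          * S4 (p + q - Suc i) (Suc i) c (-a) b z x y)"
      unfolding p One_nat_def by (rule sum.shift_bounds_cl_Suc_ivl)
    also have "\<dots> = (\<Sum>i\<le>P. real (P choose i) * (Ar / Ar ^ Suc i) * (Cv ^ Suc (Suc i) / Cv ^ (Suc P + q))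
          * S4 (P + q - i) (i + 1) c (- a) b z x y)"
      unfolding atLeast0AtMost
    proof (rule sum.cong[OF refl])
      fix i assume i: "i \<in> {..P}"
      have x1: "1 - int (Suc i) = int 1 - int (Suc i)" by simp
      have x2: "1 + int (Suc i) - int p - int q = int (Suc (Suc i)) - int (Suc P + q)" using p by simp
      have y1: "real_of_int a powi (1 - int (Suc i)) = Ar / Ar ^ Suc i"
        unfolding x1 Ar_def[symmetric] by (simp only: powi_nat_diff[OF A0] power_one_right)
      have y2: "real_of_int c powi (1 + int (Suc i) - int p - int q) = Cv ^ Suc (Suc i) / Cv ^ (Suc P + q)"
        unfolding x2 Cv_def[symmetric] by (simp only: powi_nat_diff[OF C0])
      have x3: "p + q - Suc i = P + q - i" "p - 1 = P" "Suc i - 1 = i" using p by simp_all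
      show "real ((p - 1) choose (Suc i - 1))
          * real_of_int a powi (1 - int (Suc i)) * real_of_int c powi (1 + int (Suc i) - int p - int q)
          * S4 (p + q - Suc i) (Suc i) c (-a) b z x y
          = real (P choose i) * (Ar / Ar ^ Suc i) * (Cv ^ Suc (Suc i) / Cv ^ (Suc P + q))
          * S4 (P + q - i) (i + 1) c (- a) b z x y"
        unfolding y1 y2 x3 by simp
    qed
    finally show ?thesis .
  qed
  have R2: "(\<Sum>h=0..q. real (q choose h) * (-1) ^ h
          * real_of_int b powi (1 - int h) * real_of_int c powi (1 + int h - int p - int q)
          * S35 (p + q - h) h c b a z (-y) x)
      = (\<Sum>j\<le>q. real (q choose j) * (-1) ^ j * (Bv / Bv ^ j) * (Cv ^ Suc j / Cv ^ (Suc P + q))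
          * S35 (P + q - j + 1) j c b a z (- y) x)"
    unfolding atLeast0AtMost
  proof (rule sum.cong[OF refl])
    fix j assume j: "j \<in> {..q}"
    have x1: "1 - int j = int 1 - int j" by simp
    have x2: "1 + int j - int p - int q = int (Suc j) - int (Suc P + q)" using p by simp
    have x3: "p + q - j = P + q - j + 1" using p j by simp
    show "real (q choose j) * (-1) ^ j
          * real_of_int b powi (1 - int j) * real_of_int c powi (1 + int j - int p - int q)
          * S35 (p + q - j) j c b a z (-y) x
        = real (q choose j) * (-1) ^ j * (Bv / Bv ^ j) * (Cv ^ Suc j / Cv ^ (Suc P + q))
          * S35 (P + q - j + 1) j c b a z (- y) x"
      unfolding x1 x2 x3 Bv_def[symmetric] Cv_def[symmetric]
      by (simp only: powi_nat_diff[OF B0] powi_nat_diff[OF C0] power_one_right)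
  qed
  have L: "real_of_int a powi (1 - int p) * real_of_int b powi (1 - int q) * S35 p q a b c x y z
      = (\<Sum>i\<le>P. (1 / Ar ^ P) * (Bv / Bv ^ q) * (1 / 2) * T i) - (\<Sum>j\<le>q. (1 / Ar ^ P) * (Bv / Bv ^ q) * U j)"
  proof -
    have "real_of_int a powi (1 - int p) * real_of_int b powi (1 - int q) * S35 p q a b c x y z
        = (1 / Ar ^ P) * (Bv / Bv ^ q) * ((1 / 2) * (\<Sum>i\<le>P. T i) - (\<Sum>j\<le>q. U j))"
      unfolding e1 e2 unfolding p S_def[symmetric] Seq ..
    also have "\<dots> = (\<Sum>i\<le>P. (1 / Ar ^ P) * (Bv / Bv ^ q) * (1 / 2) * T i) - (\<Sum>j\<le>q. (1 / Ar ^ P) * (Bv / Bv ^ q) * U j)"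
      by (simp only: right_diff_distrib sum_distrib_left mult.assoc)
    finally show ?thesis .
  qed
  also have "\<dots> = (\<Sum>i\<le>P. - (real q / 2) * (real (P choose i) * (Ar / Ar ^ Suc i) * (Cv ^ Suc (Suc i) / Cv ^ (Suc P + q))
          * S4 (P + q - i) (i + 1) c (- a) b z x y))
      - (\<Sum>j\<le>q. - (real (q choose j) * (-1) ^ j * (Bv / Bv ^ j) * (Cv ^ Suc j / Cv ^ (Suc P + q))
          * S35 (P + q - j + 1) j c b a z (- y) x))"
  proof -
    have "(\<Sum>i\<le>P. (1 / Ar ^ P) * (Bv / Bv ^ q) * (1 / 2) * T i)
        = (\<Sum>i\<le>P. - (real q / 2) * (real (P choose i) * (Ar / Ar ^ Suc i) * (Cv ^ Suc (Suc i) / Cv ^ (Suc P + q))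
          * S4 (P + q - i) (i + 1) c (- a) b z x y))"
      unfolding T_def by (rule sum.cong[OF refl]) (rule termT[OF A0 B0 C0 _ assms(9)], simp)
    moreover have "(\<Sum>j\<le>q. (1 / Ar ^ P) * (Bv / Bv ^ q) * U j)
        = (\<Sum>j\<le>q. - (real (q choose j) * (-1) ^ j * (Bv / Bv ^ j) * (Cv ^ Suc j / Cv ^ (Suc P + q))
          * S35 (P + q - j + 1) j c b a z (- y) x))"
      unfolding U_def by (rule sum.cong[OF refl]) (rule termU[OF A0 B0 C0], simp)
    ultimately show ?thesis by simp
  qed
  also have "\<dots> = - (real q / 2) * (\<Sum>j=1..p. real ((p - 1) choose (j - 1))
          * real_of_int a powi (1 - int j) * real_of_int c powi (1 + int j - int p - int q)
          * S4 (p + q - j) j c (-a) b z x y)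
      + (\<Sum>h=0..q. real (q choose h) * (-1) ^ h
          * real_of_int b powi (1 - int h) * real_of_int c powi (1 + int h - int p - int q)
          * S35 (p + q - h) h c b a z (-y) x)"
    unfolding R1 R2 by (simp add: sum_distrib_left sum_negf)
  finally show ?thesis .
qed

end
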